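(* Let $G$ be a countable group, $\Sigma$ a map sequence for $G$ and $(G,X,\mu)$ a $G$-system. Let $\alpha,\beta\in\mathcal P$ and suppose that $\alpha$ refines $\beta$. Then for every finite $F\subset G$, $$H(\Sigma,\beta:F)-H(\beta)\ge H(\Sigma,\alpha:F)-H(\alpha).$$
   Context: $\mathrm{Sym}(m)$ is the symmetric group on $\{1,\dots,m\}$. A map sequence for $G$ is a sequence $\Sigma=\{\sigma_i\}$ of maps (not necessarily homomorphisms) $\sigma_i:G\to\mathrm{Sym}(m_i)$ with $m_i\to\infty$. A $G$-system is a measure-preserving action on a probability space $(X,\mu)$. $\mathcal P$ is the set of measurable (ordered) partitions $\alpha=(A_1,A_2,\dots)$ of $X$ into at most countably many atoms with finite entropy $H(\alpha)=-\sum\mu(A_i)\log\mu(A_i)$, modulo null sets. $\alpha$ refines $\beta$ (written $\beta\le\alpha$) if every atom of $\alpha$ is contained up to a null set in an atom of $\beta$. With $\zeta$ uniform on $\{1,\dots,m\}$, for $\sigma:G\to\mathrm{Sym}(m)$, a partition $\beta=(B_1,\dots)$ of $\{1,\dots,m\}$ and finite $F$: $d_F(\alpha,\beta)=\sum_{\phi:F\to\mathbb N}|\mu(\bigcap_{f\in F}fA_{\phi(f)})-\zeta(\bigcap_{f\in F}\sigma(f)B_{\phi(f)})|$ (missing atoms empty). For finite $\alpha=(A_1,\dots,A_u)$, $\mathcal{AP}(\sigma,\alpha:F,\epsilon)$ is the set of ordered partitions $(B_1,\dots,B_u)$ of $\{1,\dots,m\}$ with $d_F(\alpha,\beta)\le\epsilon$,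 and $H(\Sigma,\alpha:F)=\lim_{\epsilon\to0}\limsup_i\frac1{m_i}\log|\mathcal{AP}(\sigma_i,\alpha:F,\epsilon)|$ ($\log 0=-\infty$). A chain of $\alpha$ is a sequence of finite partitions $\alpha_1\le\alpha_2\le\cdots\le\alpha$ with $\bigvee_n\alpha_n=\alpha$. For general $\alpha\in\mathcal P$, $H(\Sigma,\alpha:F)=\inf\{\lim_nH(\Sigma,\alpha_n:F):\{\alpha_n\}\text{ a chain of }\alpha\}$. *)

theory Defs
  imports "HOL-Probability.Probability" "HOL-Combinatorics.Permutations" "HOL-Library.Countable"
begin

definition map_sequence :: "(nat \<Rightarrow> 'g \<Rightarrow> nat \<Rightarrow> nat) \<Rightarrow> (nat \<Rightarrow> nat) \<Rightarrow> bool" where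
  "map_sequence \<sigma> m \<longleftrightarrow> (\<forall>i g. \<sigma> i g permutes {1..m i}) \<and> filterlim m at_top sequentially"

definition mp_action :: "'x measure \<Rightarrow> ('g::group_add \<Rightarrow> 'x \<Rightarrow> 'x) \<Rightarrow> bool" where
  "mp_action M T \<longleftrightarrow> prob_space M
     \<and> (\<forall>g. T g \<in> M \<rightarrow>\<^sub>M M \<and> distr M M (T g) = M)
     \<and> (\<forall>x\<in>space M. T 0 x = x)
     \<and> (\<forall>g h. \<forall>x\<in>space M. T (g + h) x = T g (T h x))"

text \<open>Ordered measurable partitions into at most countably many atoms (indexed by nat;
  missing atoms are empty).\<close>
definition is_partition :: "'x measure \<Rightarrow> (nat \<Rightarrow> 'x set) \<Rightarrow> bool" where
  "is_partition M \<alpha> \<longleftrightarrow> (\<forall>i. \<alpha> i \<in> sets M) \<and> disjoint_family \<alpha> \<and> (\<Union>i. \<alpha> i) = space M"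

definition part_entropy :: "'x measure \<Rightarrow> (nat \<Rightarrow> 'x set) \<Rightarrow> real" where
  "part_entropy M \<alpha> = (\<Sum>i. - measure M (\<alpha> i) * ln (measure M (\<alpha> i)))"

definition in_P :: "'x measure \<Rightarrow> (nat \<Rightarrow> 'x set) \<Rightarrow> bool" where
  "in_P M \<alpha> \<longleftrightarrow> is_partition M \<alpha> \<and> summable (\<lambda>i. - measure M (\<alpha> i) * ln (measure M (\<alpha> i)))"

text \<open>part_le M beta alpha: alpha refines beta (every atom of alpha is contained, up to a
  null set, in an atom of beta).\<close>
definition part_le :: "'x measure \<Rightarrow> (nat \<Rightarrow> 'x set) \<Rightarrow> (nat \<Rightarrow> 'x set) \<Rightarrow> bool" where
  "part_le M \<beta> \<alpha> \<longleftrightarrow> (\<forall>i. \<exists>j. emeasure M (\<alpha> i - \<beta> j) = 0)"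

definition finite_part :: "'x measure \<Rightarrow> (nat \<Rightarrow> 'x set) \<Rightarrow> bool" where
  "finite_part M \<alpha> \<longleftrightarrow> (\<exists>u. \<forall>i\<ge>u. emeasure M (\<alpha> i) = 0)"

definition part_len :: "'x measure \<Rightarrow> (nat \<Rightarrow> 'x set) \<Rightarrow> nat" where
  "part_len M \<alpha> = (LEAST u. \<forall>i\<ge>u. emeasure M (\<alpha> i) = 0)"

text \<open>A chain of alpha: finite partitions alpha_1 <= alpha_2 <= ... <= alpha whose join is
  alpha (every atom of alpha lies, modulo null sets, in the sigma-algebra generated by the
  atoms of all alpha_n).\<close>
definition is_chain :: "'x measure \<Rightarrow> (nat \<Rightarrow> nat \<Rightarrow> 'x set) \<Rightarrow> (nat \<Rightarrow> 'x set) \<Rightarrow> bool" where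
  "is_chain M \<alpha>s \<alpha> \<longleftrightarrow>
     (\<forall>n. is_partition M (\<alpha>s n) \<and> finite_part M (\<alpha>s n))
   \<and> (\<forall>n. part_le M (\<alpha>s n) (\<alpha>s (Suc n)))
   \<and> (\<forall>n. part_le M (\<alpha>s n) \<alpha>)
   \<and> (\<forall>i. \<exists>S \<in> sigma_sets (space M) (\<Union>n. range (\<alpha>s n)).
          emeasure M ((S - \<alpha> i) \<union> (\<alpha> i - S)) = 0)"

definition dF :: "'x measure \<Rightarrow> ('g \<Rightarrow> 'x \<Rightarrow> 'x) \<Rightarrow> 'g set \<Rightarrow> (nat \<Rightarrow> 'x set)
                  \<Rightarrow> ('g \<Rightarrow> nat \<Rightarrow> nat) \<Rightarrow> nat \<Rightarrow> (nat \<Rightarrow> nat set) \<Rightarrow> real" where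
  "dF M T F \<alpha> \<sigma> m B =
     infsum (\<lambda>\<phi>. \<bar>measure M (space M \<inter> (\<Inter>f\<in>F. T f ` \<alpha> (\<phi> f)))
                  - real (card ({1..m} \<inter> (\<Inter>f\<in>F. \<sigma> f ` B (\<phi> f)))) / real m\<bar>)
            (F \<rightarrow>\<^sub>E (UNIV :: nat set))"

definition AP :: "'x measure \<Rightarrow> ('g \<Rightarrow> 'x \<Rightarrow> 'x) \<Rightarrow> 'g set \<Rightarrow> (nat \<Rightarrow> 'x set)
                  \<Rightarrow> ('g \<Rightarrow> nat \<Rightarrow> nat) \<Rightarrow> nat \<Rightarrow> real \<Rightarrow> (nat \<Rightarrow> nat set) set" where
  "AP M T F \<alpha> \<sigma> m \<epsilon> = {B. (\<forall>i. B i \<subseteq> {1..m}) \<and> disjoint_family B \<and> (\<Union>i. B i) = {1..m}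
      \<and> (\<forall>i\<ge>part_len M \<alpha>. B i = {}) \<and> dF M T F \<alpha> \<sigma> m B \<le> \<epsilon>}"

definition sofic_H_fin :: "'x measure \<Rightarrow> ('g \<Rightarrow> 'x \<Rightarrow> 'x) \<Rightarrow> (nat \<Rightarrow> 'g \<Rightarrow> nat \<Rightarrow> nat)
                  \<Rightarrow> (nat \<Rightarrow> nat) \<Rightarrow> 'g set \<Rightarrow> (nat \<Rightarrow> 'x set) \<Rightarrow> ereal" where
  "sofic_H_fin M T \<sigma> m F \<alpha> =
     Lim (at_right (0::real))
       (\<lambda>\<epsilon>. limsup (\<lambda>i. let c = card (AP M T F \<alpha> (\<sigma> i) (m i) \<epsilon>) in
                         if c = 0 then (-\<infinity>::ereal) else ereal (ln (real c) / real (m i))))"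

definition sofic_H :: "'x measure \<Rightarrow> ('g \<Rightarrow> 'x \<Rightarrow> 'x) \<Rightarrow> (nat \<Rightarrow> 'g \<Rightarrow> nat \<Rightarrow> nat)
                  \<Rightarrow> (nat \<Rightarrow> nat) \<Rightarrow> 'g set \<Rightarrow> (nat \<Rightarrow> 'x set) \<Rightarrow> ereal" where
  "sofic_H M T \<sigma> m F \<alpha> =
     (if finite_part M \<alpha> then sofic_H_fin M T \<sigma> m F \<alpha>
      else Inf {lim (\<lambda>n. sofic_H_fin M T \<sigma> m F (\<alpha>s n)) | \<alpha>s. is_chain M \<alpha>s \<alpha>})"

end

theory Submission
  imports Defs
begin

definition lab :: "(nat \<Rightarrow> 'a set) \<Rightarrow> 'a \<Rightarrow> nat" where
  "lab \<alpha> x = (THE i. x \<in> \<alpha> i)"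

lemma lab_eq: "disjoint_family \<alpha> \<Longrightarrow> x \<in> \<alpha> i \<Longrightarrow> lab \<alpha> x = i"
  unfolding lab_def by (rule the_equality) (auto simp: disjoint_family_on_def)

lemma lab_in: "disjoint_family \<alpha> \<Longrightarrow> x \<in> (\<Union>i. \<alpha> i) \<Longrightarrow> x \<in> \<alpha> (lab \<alpha> x)"
proof -
  assume d: "disjoint_family \<alpha>" and "x \<in> (\<Union>i. \<alpha> i)"
  then obtain i where i: "x \<in> \<alpha> i" by auto
  then show ?thesis using lab_eq[OF d i] by simp
qed

locale gsys =
  fixes M :: "'x measure" and T :: "'g::group_add \<Rightarrow> 'x \<Rightarrow> 'x"
  assumes mp: "mp_action M T"
begin

sublocale prob_space M using mp by (simp add: mp_action_def)

lemma T_meas: "T g \<in> M \<rightarrow>\<^sub>M M" using mp by (simp add: mp_action_def)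
lemma T_distr: "distr M M (T g) = M" using mp by (simp add: mp_action_def)
lemma T_space: "x \<in> space M \<Longrightarrow> T g x \<in> space M"
  using measurable_space[OF T_meas] .

lemma T_inv: "x \<in> space M \<Longrightarrow> T (-g) (T g x) = x"
proof -
  assume x: "x \<in> space M"
  have "T (-g + g) x = T (-g) (T g x)" using mp x unfolding mp_action_def by blast
  moreover have "T 0 x = x" using mp x unfolding mp_action_def by blast
  ultimately show ?thesis by simp
qed

lemma T_inv': "x \<in> space M \<Longrightarrow> T g (T (-g) x) = x"
  using T_inv[of x "-g"] by simp

lemma T_img: "A \<subseteq> space M \<Longrightarrow> T g ` A = {x\<in>space M. T (-g) x \<in> A}"
proof (intro set_eqI iffI)
  fix x assume A: "A \<subseteq> space M" and "x \<in> T g ` A"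
  then obtain y where y: "y \<in> A" "x = T g y" by auto
  then show "x \<in> {x\<in>space M. T (-g) x \<in> A}" using A T_space T_inv by auto
next
  fix x assume A: "A \<subseteq> space M" and "x \<in> {x\<in>space M. T (-g) x \<in> A}"
  then have "x = T g (T (-g) x)" "T (-g) x \<in> A" using T_inv' by auto
  then show "x \<in> T g ` A" by blast
qed

lemma T_img': "A \<subseteq> space M \<Longrightarrow> T g ` A = T (-g) -` A \<inter> space M"
  using T_img by auto

lemma T_img_sets: "A \<in> sets M \<Longrightarrow> T g ` A \<in> sets M"
  using T_img'[OF sets.sets_into_space] measurable_sets[OF T_meas] by simp

lemma T_img_emeasure: "A \<in> sets M \<Longrightarrow> emeasure M (T g ` A) = emeasure M A"
proof -
  assume A: "A \<in> sets M"
  have "emeasure M (T g ` A) = emeasure M (T (-g) -` A \<inter> space M)"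
    using T_img'[OF sets.sets_into_space[OF A]] by simp
  also have "\<dots> = emeasure (distr M M (T (-g))) A"
    using A T_meas by (simp add: emeasure_distr)
  also have "\<dots> = emeasure M A" using T_distr by simp
  finally show ?thesis .
qed

lemma T_img_measure: "A \<in> sets M \<Longrightarrow> measure M (T g ` A) = measure M A"
  using T_img_emeasure by (simp add: measure_def)

lemma T_img_null: "A \<in> null_sets M \<Longrightarrow> T g ` A \<in> null_sets M"
  using T_img_sets T_img_emeasure by (auto simp: null_sets_def)

lemma part_sub: "is_partition M \<alpha> \<Longrightarrow> \<alpha> i \<subseteq> space M"
  unfolding is_partition_def by blast

lemma part_sets: "is_partition M \<alpha> \<Longrightarrow> \<alpha> i \<in> sets M"
  unfolding is_partition_def by blast

lemma part_disj: "is_partition M \<alpha> \<Longrightarrow> disjoint_family \<alpha>"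
  unfolding is_partition_def by blast

lemma part_lab: "is_partition M \<alpha> \<Longrightarrow> x \<in> space M \<Longrightarrow> x \<in> \<alpha> (lab \<alpha> x)"
  unfolding is_partition_def using lab_in[of \<alpha> x] by auto

lemma part_lab_eq: "is_partition M \<alpha> \<Longrightarrow> x \<in> \<alpha> i \<Longrightarrow> lab \<alpha> x = i"
  by (rule lab_eq[OF part_disj])

lemma part_len: "finite_part M \<alpha> \<Longrightarrow> i \<ge> part_len M \<alpha> \<Longrightarrow> emeasure M (\<alpha> i) = 0"
proof -
  assume "finite_part M \<alpha>" "i \<ge> part_len M \<alpha>"
  have "\<forall>i\<ge>part_len M \<alpha>. emeasure M (\<alpha> i) = 0"
    using \<open>finite_part M \<alpha>\<close> unfolding finite_part_def part_len_def by (rule LeastI_ex)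
  then show ?thesis using \<open>i \<ge> part_len M \<alpha>\<close> by blast
qed

lemma part_len_null: "is_partition M \<alpha> \<Longrightarrow> finite_part M \<alpha> \<Longrightarrow> i \<ge> part_len M \<alpha> \<Longrightarrow> \<alpha> i \<in> null_sets M"
  using part_len part_sets by (auto simp: null_sets_def)

lemma part_len_measure: "finite_part M \<alpha> \<Longrightarrow> i \<ge> part_len M \<alpha> \<Longrightarrow> measure M (\<alpha> i) = 0"
  using part_len by (simp add: measure_def)

lemma part_len_pos: "is_partition M \<alpha> \<Longrightarrow> finite_part M \<alpha> \<Longrightarrow> 0 < part_len M \<alpha>"
proof (rule ccontr)
  assume p: "is_partition M \<alpha>" and f: "finite_part M \<alpha>" and "\<not> 0 < part_len M \<alpha>"
  then have "\<And>i. \<alpha> i \<in> null_sets M" using part_len_null by auto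
  then have "(\<Union>i. \<alpha> i) \<in> null_sets M" by auto
  then have "space M \<in> null_sets M" using p by (simp add: is_partition_def)
  then show False using emeasure_space_1 by (simp add: null_sets_def)
qed

lemma part_entropy_fin:
  assumes "finite_part M \<alpha>"
  shows "part_entropy M \<alpha> = (\<Sum>i<part_len M \<alpha>. - measure M (\<alpha> i) * ln (measure M (\<alpha> i)))"
  unfolding part_entropy_def
  by (rule suminf_finite) (use part_len_measure[OF assms] in auto)

lemma summable_fin:
  assumes "finite_part M \<alpha>"
  shows "summable (\<lambda>i. - measure M (\<alpha> i) * ln (measure M (\<alpha> i)))"
  by (rule summable_finite[of "{..<part_len M \<alpha>}"]) (use part_len_measure[OF assms] in auto)

end

locale gsysF = gsys M T for M :: "'x measure" and T :: "'g::group_add \<Rightarrow> 'x \<Rightarrow> 'x" +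
  fixes F :: "'g set"
  assumes finF: "finite F" and neF: "F \<noteq> {}"
begin

definition Dlt :: "(nat \<Rightarrow> 'x set) \<Rightarrow> ('g \<Rightarrow> nat) \<Rightarrow> 'x set" where
  "Dlt \<alpha> \<phi> = space M \<inter> (\<Inter>f\<in>F. T f ` \<alpha> (\<phi> f))"

definition rl :: "(nat \<Rightarrow> 'x set) \<Rightarrow> 'x \<Rightarrow> 'g \<Rightarrow> nat" where
  "rl \<alpha> x = restrict (\<lambda>f. lab \<alpha> (T (-f) x)) F"

lemma rl_ext: "rl \<alpha> x \<in> extensional F"
  unfolding rl_def by simp

lemma Dlt_eq:
  assumes p: "is_partition M \<alpha>" and e: "\<phi> \<in> extensional F"
  shows "Dlt \<alpha> \<phi> = {x\<in>space M. rl \<alpha> x = \<phi>}"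
proof (intro set_eqI iffI)
  fix x assume x: "x \<in> Dlt \<alpha> \<phi>"
  then have xs: "x \<in> space M" by (simp add: Dlt_def)
  have "\<forall>f\<in>F. lab \<alpha> (T (-f) x) = \<phi> f"
  proof
    fix f assume "f \<in> F"
    then have "x \<in> T f ` \<alpha> (\<phi> f)" using x by (simp add: Dlt_def)
    then have "T (-f) x \<in> \<alpha> (\<phi> f)" using T_img[OF part_sub[OF p]] by auto
    then show "lab \<alpha> (T (-f) x) = \<phi> f" using part_lab_eq[OF p] by simp
  qed
  then have "rl \<alpha> x = \<phi>" using e unfolding rl_def by (auto simp: extensional_def)
  then show "x \<in> {x\<in>space M. rl \<alpha> x = \<phi>}" using xs by simp
next
  fix x assume x: "x \<in> {x\<in>space M. rl \<alpha> x = \<phi>}"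
  then have xs: "x \<in> space M" and r: "rl \<alpha> x = \<phi>" by auto
  have "x \<in> T f ` \<alpha> (\<phi> f)" if f: "f \<in> F" for f
  proof -
    have "\<phi> f = lab \<alpha> (T (-f) x)" using r f unfolding rl_def by auto
    moreover have "T (-f) x \<in> \<alpha> (lab \<alpha> (T (-f) x))" using part_lab[OF p T_space[OF xs]] .
    ultimately show ?thesis using T_img[OF part_sub[OF p]] xs by auto
  qed
  then show "x \<in> Dlt \<alpha> \<phi>" using xs by (simp add: Dlt_def)
qed

lemma Dlt_sets: assumes p: "is_partition M \<alpha>" shows "Dlt \<alpha> \<phi> \<in> sets M"
proof -
  have "(\<Inter>f\<in>F. T f ` \<alpha> (\<phi> f)) \<in> sets M"
    using finF neF T_img_sets part_sets[OF p] by (intro sets.finite_INT) auto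
  then show ?thesis unfolding Dlt_def by auto
qed

lemma decomp:
  assumes p: "is_partition M \<alpha>" and S: "finite S" "S \<subseteq> extensional F"
  shows "{x\<in>space M. rl \<alpha> x \<in> S} \<in> sets M"
    and "measure M {x\<in>space M. rl \<alpha> x \<in> S} = (\<Sum>\<phi>\<in>S. measure M (Dlt \<alpha> \<phi>))"
proof -
  have eq: "{x\<in>space M. rl \<alpha> x \<in> S} = (\<Union>\<phi>\<in>S. Dlt \<alpha> \<phi>)"
    using Dlt_eq[OF p] S(2) by auto
  show "{x\<in>space M. rl \<alpha> x \<in> S} \<in> sets M" unfolding eq
    using Dlt_sets[OF p] S(1) by auto
  have "measure M (\<Union>\<phi>\<in>S. Dlt \<alpha> \<phi>) = (\<Sum>\<phi>\<in>S. measure M (Dlt \<alpha> \<phi>))"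
  proof (rule measure_finite_Union)
    show "disjoint_family_on (Dlt \<alpha>) S"
      unfolding disjoint_family_on_def
    proof (intro ballI impI)
      fix a b assume "a \<in> S" "b \<in> S" "a \<noteq> b"
      moreover have "a \<in> extensional F" "b \<in> extensional F" using S(2) \<open>a \<in> S\<close> \<open>b \<in> S\<close> by auto
      ultimately show "Dlt \<alpha> a \<inter> Dlt \<alpha> b = {}"
        using Dlt_eq[OF p, of a] Dlt_eq[OF p, of b] by auto
    qed
  qed (use S Dlt_sets[OF p] in auto)
  then show "measure M {x\<in>space M. rl \<alpha> x \<in> S} = (\<Sum>\<phi>\<in>S. measure M (Dlt \<alpha> \<phi>))"
    unfolding eq .
qed

lemma measure_eq_null:
  assumes "A \<in> sets M" "B \<in> sets M" "N \<in> null_sets M" "A - B \<subseteq> N" "B - A \<subseteq> N"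
  shows "measure M A = measure M B"
proof (rule measure_eq_AE)
  show "AE x in M. (x \<in> A) = (x \<in> B)"
    using AE_not_in[OF assms(3)] by eventually_elim (use assms in auto)
qed (use assms in auto)

definition Nl :: "(nat \<Rightarrow> 'x set) \<Rightarrow> 'x set" where
  "Nl \<alpha> = (\<Union>f\<in>F. T f ` (\<Union>i\<in>{part_len M \<alpha>..}. \<alpha> i))"

lemma Nl_null: assumes p: "is_partition M \<alpha>" and fp: "finite_part M \<alpha>"
  shows "Nl \<alpha> \<in> null_sets M"
proof -
  have "(\<Union>i\<in>{part_len M \<alpha>..}. \<alpha> i) \<in> null_sets M"
    using part_len_null[OF p fp] by (intro null_sets_UN') auto
  then show ?thesis unfolding Nl_def using finF T_img_null
    by (intro null_sets.finite_UN) auto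
qed

lemma rl_lt: assumes p: "is_partition M \<alpha>" and x: "x \<in> space M" "x \<notin> Nl \<alpha>"
  shows "rl \<alpha> x \<in> PiE F (\<lambda>_. {..<part_len M \<alpha>})"
proof -
  have "lab \<alpha> (T (-f) x) < part_len M \<alpha>" if f: "f \<in> F" for f
  proof (rule ccontr)
    let ?y = "T (-f) x"
    assume "\<not> lab \<alpha> ?y < part_len M \<alpha>"
    moreover have "?y \<in> \<alpha> (lab \<alpha> ?y)" using part_lab[OF p T_space[OF x(1)]] .
    ultimately have y: "?y \<in> (\<Union>i\<in>{part_len M \<alpha>..}. \<alpha> i)" by (intro UN_I[of "lab \<alpha> ?y"]) auto
    have "x = T f ?y" using T_inv'[OF x(1)] by simp
    then have "x \<in> T f ` (\<Union>i\<in>{part_len M \<alpha>..}. \<alpha> i)" using y by (rule image_eqI)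
    then have "x \<in> Nl \<alpha>" using f unfolding Nl_def by (rule UN_I[rotated])
    then show False using x by simp
  qed
  then show ?thesis unfolding rl_def by auto
qed

end

context gsysF begin

lemma marginal_meas:
  assumes p: "is_partition M \<alpha>" and fp: "finite_part M \<alpha>" and f0: "f0 \<in> F"
  shows "measure M (\<alpha> j) = (\<Sum>\<phi>\<in>{\<phi>\<in>PiE F (\<lambda>_. {..<part_len M \<alpha>}). \<phi> f0 = j}. measure M (Dlt \<alpha> \<phi>))"
proof -
  let ?S = "{\<phi>\<in>PiE F (\<lambda>_. {..<part_len M \<alpha>}). \<phi> f0 = j}"
  have fS: "finite ?S" by (rule finite_subset[of _ "PiE F (\<lambda>_. {..<part_len M \<alpha>})"]) (auto intro: finite_PiE finF)
  have eS: "?S \<subseteq> extensional F" by (auto simp: PiE_def)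
  have "measure M (\<alpha> j) = measure M (T f0 ` \<alpha> j)"
    using T_img_measure part_sets[OF p] by simp
  also have "\<dots> = measure M {x\<in>space M. rl \<alpha> x \<in> ?S}"
  proof (rule measure_eq_null)
    show "T f0 ` \<alpha> j \<in> sets M" using T_img_sets part_sets[OF p] by simp
    show "{x\<in>space M. rl \<alpha> x \<in> ?S} \<in> sets M" using decomp(1)[OF p fS eS] .
    show "Nl \<alpha> \<in> null_sets M" using Nl_null[OF p fp] .
    have key: "x \<in> T f0 ` \<alpha> j \<longleftrightarrow> rl \<alpha> x \<in> ?S" if x: "x \<in> space M" "x \<notin> Nl \<alpha>" for x
    proof -
      have r: "rl \<alpha> x \<in> PiE F (\<lambda>_. {..<part_len M \<alpha>})" using rl_lt[OF p x] .
      have "x \<in> T f0 ` \<alpha> j \<longleftrightarrow> T (-f0) x \<in> \<alpha> j" using T_img[OF part_sub[OF p]] x by auto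
      also have "\<dots> \<longleftrightarrow> lab \<alpha> (T (-f0) x) = j"
        using part_lab[OF p T_space[OF x(1)]] part_lab_eq[OF p] by metis
      also have "\<dots> \<longleftrightarrow> rl \<alpha> x f0 = j" using f0 by (simp add: rl_def)
      finally show ?thesis using r by auto
    qed
    show "T f0 ` \<alpha> j - {x\<in>space M. rl \<alpha> x \<in> ?S} \<subseteq> Nl \<alpha>"
      using key T_img[OF part_sub[OF p]] by blast
    show "{x\<in>space M. rl \<alpha> x \<in> ?S} - T f0 ` \<alpha> j \<subseteq> Nl \<alpha>"
      using key by blast
  qed
  also have "\<dots> = (\<Sum>\<phi>\<in>?S. measure M (Dlt \<alpha> \<phi>))" using decomp(2)[OF p fS eS] .
  finally show ?thesis .
qed

end

definition cmap :: "'x measure \<Rightarrow> (nat \<Rightarrow> 'x set) \<Rightarrow> (nat \<Rightarrow> 'x set) \<Rightarrow> nat \<Rightarrow> nat" where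
  "cmap M \<gamma> \<delta> j = (SOME k. k < part_len M \<gamma> \<and> emeasure M (\<delta> j - \<gamma> k) = 0)"

context gsys begin

lemma cmap_ex:
  assumes pG: "is_partition M \<gamma>" and fG: "finite_part M \<gamma>" and pD: "is_partition M \<delta>"
    and le: "part_le M \<gamma> \<delta>"
  shows "\<exists>k. k < part_len M \<gamma> \<and> emeasure M (\<delta> j - \<gamma> k) = 0"
proof -
  obtain k where k: "emeasure M (\<delta> j - \<gamma> k) = 0" using le unfolding part_le_def by blast
  show ?thesis
  proof (cases "k < part_len M \<gamma>")
    case True then show ?thesis using k by blast
  next
    case False
    then have n2: "\<gamma> k \<in> null_sets M" using part_len_null[OF pG fG] by simp
    have n1: "\<delta> j - \<gamma> k \<in> null_sets M" using k part_sets[OF pD] part_sets[OF pG]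
      by (auto simp: null_sets_def)
    have "(\<delta> j - \<gamma> k) \<union> \<gamma> k \<in> null_sets M" by (rule null_sets.Un[OF n1 n2])
    then have "\<delta> j \<in> null_sets M"
      by (rule null_sets_subset) (use part_sets[OF pD] in auto)
    then have "\<delta> j - \<gamma> 0 \<in> null_sets M"
      by (rule null_sets_subset) (use part_sets[OF pD] part_sets[OF pG] in auto)
    then show ?thesis using part_len_pos[OF pG fG] by (auto simp: null_sets_def)
  qed
qed

lemma cmap_lt: "is_partition M \<gamma> \<Longrightarrow> finite_part M \<gamma> \<Longrightarrow> is_partition M \<delta> \<Longrightarrow> part_le M \<gamma> \<delta> \<Longrightarrow> cmap M \<gamma> \<delta> j < part_len M \<gamma>"
  and cmap_null: "is_partition M \<gamma> \<Longrightarrow> finite_part M \<gamma> \<Longrightarrow> is_partition M \<delta> \<Longrightarrow> part_le M \<gamma> \<delta> \<Longrightarrow> emeasure M (\<delta> j - \<gamma> (cmap M \<gamma> \<delta> j)) = 0"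
  using someI_ex[OF cmap_ex[of \<gamma> \<delta> j]] unfolding cmap_def by auto

end

locale refine = gsysF M T F for M :: "'x measure" and T :: "'g::group_add \<Rightarrow> 'x \<Rightarrow> 'x" and F +
  fixes \<gamma> \<delta> :: "nat \<Rightarrow> 'x set"
  assumes pG: "is_partition M \<gamma>" and fG: "finite_part M \<gamma>"
    and pD: "is_partition M \<delta>" and fD: "finite_part M \<delta>"
    and le: "part_le M \<gamma> \<delta>"
begin

abbreviation "uG \<equiv> part_len M \<gamma>"
abbreviation "uD \<equiv> part_len M \<delta>"

abbreviation "c \<equiv> cmap M \<gamma> \<delta>"

lemma c_lt: "c j < uG" and c_null: "emeasure M (\<delta> j - \<gamma> (c j)) = 0"
  using cmap_lt[OF pG fG pD le] cmap_null[OF pG fG pD le] by auto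

definition "Z0 = (\<Union>j. \<delta> j - \<gamma> (c j))"

lemma Z0_null: "Z0 \<in> null_sets M"
  unfolding Z0_def using c_null part_sets[OF pD] part_sets[OF pG]
  by (intro null_sets_UN) (auto simp: null_sets_def)

lemma lab_c: assumes y: "y \<in> space M" "y \<notin> Z0" shows "lab \<gamma> y = c (lab \<delta> y)"
proof -
  have "y \<in> \<delta> (lab \<delta> y)" using part_lab[OF pD y(1)] .
  then have "y \<in> \<gamma> (c (lab \<delta> y))" using y(2) unfolding Z0_def by blast
  then show ?thesis by (rule part_lab_eq[OF pG])
qed

definition "Nc = (\<Union>f\<in>F. T f ` Z0)"

lemma Nc_null: "Nc \<in> null_sets M"
  unfolding Nc_def using finF T_img_null Z0_null by (intro null_sets.finite_UN) auto

lemma rl_c: assumes x: "x \<in> space M" "x \<notin> Nc"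
  shows "rl \<gamma> x = restrict (c \<circ> rl \<delta> x) F"
proof -
  have "lab \<gamma> (T (-f) x) = c (lab \<delta> (T (-f) x))" if f: "f \<in> F" for f
  proof (rule lab_c)
    show "T (-f) x \<in> space M" using T_space[OF x(1)] .
    show "T (-f) x \<notin> Z0"
    proof
      assume "T (-f) x \<in> Z0"
      then have "T f (T (-f) x) \<in> T f ` Z0" by (rule imageI)
      then have "x \<in> T f ` Z0" using T_inv'[OF x(1)] by simp
      then show False using x(2) f unfolding Nc_def by blast
    qed
  qed
  then show ?thesis unfolding rl_def by auto
qed

definition fib :: "('g \<Rightarrow> nat) \<Rightarrow> ('g \<Rightarrow> nat) set" where
  "fib \<psi> = {\<phi>\<in>PiE F (\<lambda>_. {..<uD}). restrict (c \<circ> \<phi>) F = \<psi>}"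

lemma fib_meas:
  assumes \<psi>: "\<psi> \<in> extensional F"
  shows "measure M (Dlt \<gamma> \<psi>) = (\<Sum>\<phi>\<in>fib \<psi>. measure M (Dlt \<delta> \<phi>))"
proof -
  have fS: "finite (fib \<psi>)" unfolding fib_def by (rule finite_subset[of _ "PiE F (\<lambda>_. {..<uD})"]) (auto intro: finite_PiE finF)
  have eS: "fib \<psi> \<subseteq> extensional F" unfolding fib_def by (auto simp: PiE_def)
  have "measure M (Dlt \<gamma> \<psi>) = measure M {x\<in>space M. rl \<delta> x \<in> fib \<psi>}"
  proof (rule measure_eq_null)
    show "Dlt \<gamma> \<psi> \<in> sets M" using Dlt_sets[OF pG] .
    show "{x\<in>space M. rl \<delta> x \<in> fib \<psi>} \<in> sets M" using decomp(1)[OF pD fS eS] .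
    show "Nc \<union> Nl \<delta> \<in> null_sets M" using Nc_null Nl_null[OF pD fD] by auto
    have key: "x \<in> Dlt \<gamma> \<psi> \<longleftrightarrow> rl \<delta> x \<in> fib \<psi>" if x: "x \<in> space M" "x \<notin> Nc" "x \<notin> Nl \<delta>" for x
    proof -
      have r: "rl \<delta> x \<in> PiE F (\<lambda>_. {..<uD})" using rl_lt[OF pD x(1,3)] .
      have "x \<in> Dlt \<gamma> \<psi> \<longleftrightarrow> rl \<gamma> x = \<psi>" using Dlt_eq[OF pG \<psi>] x by auto
      also have "\<dots> \<longleftrightarrow> restrict (c \<circ> rl \<delta> x) F = \<psi>" using rl_c[OF x(1,2)] by simp
      finally show ?thesis using r unfolding fib_def by auto
    qed
    show "Dlt \<gamma> \<psi> - {x\<in>space M. rl \<delta> x \<in> fib \<psi>} \<subseteq> Nc \<union> Nl \<delta>"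
      using key Dlt_eq[OF pG \<psi>] by blast
    show "{x\<in>space M. rl \<delta> x \<in> fib \<psi>} - Dlt \<gamma> \<psi> \<subseteq> Nc \<union> Nl \<delta>"
      using key by blast
  qed
  also have "\<dots> = (\<Sum>\<phi>\<in>fib \<psi>. measure M (Dlt \<delta> \<phi>))" using decomp(2)[OF pD fS eS] .
  finally show ?thesis .
qed

definition "Z1 = (\<Union>i\<in>{uD..}. \<delta> i)"

lemma Z1_null: "Z1 \<in> null_sets M"
  unfolding Z1_def using part_len_null[OF pD fD] by (intro null_sets_UN') auto

lemma gamma_meas: "measure M (\<gamma> k) = (\<Sum>j\<in>{j. j < uD \<and> c j = k}. measure M (\<delta> j))"
proof -
  let ?J = "{j. j < uD \<and> c j = k}"
  have "measure M (\<gamma> k) = measure M (\<Union>j\<in>?J. \<delta> j)"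
  proof (rule measure_eq_null)
    show "\<gamma> k \<in> sets M" using part_sets[OF pG] .
    show "(\<Union>j\<in>?J. \<delta> j) \<in> sets M" using part_sets[OF pD] by auto
    show "Z0 \<union> Z1 \<in> null_sets M" using Z0_null Z1_null by auto
    have key: "y \<in> \<gamma> k \<longleftrightarrow> y \<in> (\<Union>j\<in>?J. \<delta> j)" if y: "y \<in> space M" "y \<notin> Z0" "y \<notin> Z1" for y
    proof -
      have yl: "y \<in> \<delta> (lab \<delta> y)" using part_lab[OF pD y(1)] .
      then have lt: "lab \<delta> y < uD" using y(3) unfolding Z1_def
        by (metis UN_I atLeast_iff not_le)
      have "y \<in> \<gamma> k \<longleftrightarrow> lab \<gamma> y = k" using part_lab[OF pG y(1)] part_lab_eq[OF pG] by metis
      also have "\<dots> \<longleftrightarrow> c (lab \<delta> y) = k" using lab_c[OF y(1,2)] by simp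
      also have "\<dots> \<longleftrightarrow> y \<in> (\<Union>j\<in>?J. \<delta> j)"
      proof
        assume "c (lab \<delta> y) = k"
        then have "lab \<delta> y \<in> ?J" using lt by simp
        then show "y \<in> (\<Union>j\<in>?J. \<delta> j)" using yl by (rule UN_I)
      next
        assume "y \<in> (\<Union>j\<in>?J. \<delta> j)"
        then obtain j where "j \<in> ?J" "y \<in> \<delta> j" by blast
        then show "c (lab \<delta> y) = k" using part_lab_eq[OF pD, of y j] by simp
      qed
      finally show ?thesis .
    qed
    show "\<gamma> k - (\<Union>j\<in>?J. \<delta> j) \<subseteq> Z0 \<union> Z1" using key part_sub[OF pG] by blast
    show "(\<Union>j\<in>?J. \<delta> j) - \<gamma> k \<subseteq> Z0 \<union> Z1" using key part_sub[OF pD] by blast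
  qed
  also have "\<dots> = (\<Sum>j\<in>?J. measure M (\<delta> j))"
    by (rule measure_finite_Union) (use part_sets[OF pD] in
        \<open>auto intro: disjoint_family_on_mono[OF _ part_disj[OF pD]]\<close>)
  finally show ?thesis .
qed

end

locale cside =
  fixes F :: "'g set" and \<sigma> :: "'g \<Rightarrow> nat \<Rightarrow> nat" and n :: nat
  assumes finF': "finite F" and neF': "F \<noteq> {}" and perm: "\<And>g. \<sigma> g permutes {1..n}"
begin

definition Cs :: "(nat \<Rightarrow> nat set) \<Rightarrow> ('g \<Rightarrow> nat) \<Rightarrow> nat set" where
  "Cs B \<phi> = {1..n} \<inter> (\<Inter>f\<in>F. \<sigma> f ` B (\<phi> f))"

definition rb :: "(nat \<Rightarrow> nat set) \<Rightarrow> nat \<Rightarrow> 'g \<Rightarrow> nat" where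
  "rb B x = restrict (\<lambda>f. lab B (inv (\<sigma> f) x)) F"

definition Bpart :: "nat \<Rightarrow> (nat \<Rightarrow> nat set) \<Rightarrow> bool" where
  "Bpart u B \<longleftrightarrow> (\<forall>i. B i \<subseteq> {1..n}) \<and> disjoint_family B \<and> (\<Union>i. B i) = {1..n} \<and> (\<forall>i\<ge>u. B i = {})"

lemma img_iff: "x \<in> \<sigma> f ` A \<longleftrightarrow> inv (\<sigma> f) x \<in> A"
proof -
  have b: "bij (\<sigma> f)" using permutes_bij[OF perm] .
  show ?thesis
  proof
    assume "x \<in> \<sigma> f ` A"
    then obtain y where "y \<in> A" "x = \<sigma> f y" by auto
    then show "inv (\<sigma> f) x \<in> A" using bij_is_inj[OF b] by simp
  next
    assume "inv (\<sigma> f) x \<in> A"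
    moreover have "\<sigma> f (inv (\<sigma> f) x) = x" using bij_is_surj[OF b] by (simp add: surj_f_inv_f)
    ultimately show "x \<in> \<sigma> f ` A" by (metis imageI)
  qed
qed

lemma inv_in: "x \<in> {1..n} \<Longrightarrow> inv (\<sigma> f) x \<in> {1..n}"
  using permutes_in_image[OF permutes_inv[OF perm]] by blast

lemma Bpart_lab: "Bpart u B \<Longrightarrow> x \<in> {1..n} \<Longrightarrow> x \<in> B (lab B x)"
  unfolding Bpart_def using lab_in by metis

lemma Bpart_lab_eq: "Bpart u B \<Longrightarrow> x \<in> B i \<Longrightarrow> lab B x = i"
  unfolding Bpart_def by (blast intro: lab_eq)

lemma Bpart_lab_lt: "Bpart u B \<Longrightarrow> x \<in> {1..n} \<Longrightarrow> lab B x < u"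
proof (rule ccontr)
  assume B: "Bpart u B" and x: "x \<in> {1..n}" and "\<not> lab B x < u"
  then have "B (lab B x) = {}" unfolding Bpart_def by auto
  then show False using Bpart_lab[OF B x] by simp
qed

lemma Cs_eq:
  assumes B: "Bpart u B" and e: "\<phi> \<in> extensional F"
  shows "Cs B \<phi> = {x\<in>{1..n}. rb B x = \<phi>}"
proof (intro set_eqI iffI)
  fix x assume x: "x \<in> Cs B \<phi>"
  then have xs: "x \<in> {1..n}" by (simp add: Cs_def)
  have "\<forall>f\<in>F. lab B (inv (\<sigma> f) x) = \<phi> f"
  proof
    fix f assume "f \<in> F"
    then have "x \<in> \<sigma> f ` B (\<phi> f)" using x by (simp add: Cs_def)
    then have "inv (\<sigma> f) x \<in> B (\<phi> f)" using img_iff by simp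
    then show "lab B (inv (\<sigma> f) x) = \<phi> f" by (rule Bpart_lab_eq[OF B])
  qed
  then have "rb B x = \<phi>" using e unfolding rb_def by (auto simp: extensional_def)
  then show "x \<in> {x\<in>{1..n}. rb B x = \<phi>}" using xs by simp
next
  fix x assume x: "x \<in> {x\<in>{1..n}. rb B x = \<phi>}"
  then have xs: "x \<in> {1..n}" and r: "rb B x = \<phi>" by auto
  have "x \<in> \<sigma> f ` B (\<phi> f)" if f: "f \<in> F" for f
  proof -
    have "\<phi> f = lab B (inv (\<sigma> f) x)" using r f unfolding rb_def by auto
    moreover have "inv (\<sigma> f) x \<in> B (lab B (inv (\<sigma> f) x))" using Bpart_lab[OF B inv_in[OF xs]] .
    ultimately show ?thesis using img_iff by simp
  qed
  then show "x \<in> Cs B \<phi>" using xs by (simp add: Cs_def)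
qed

lemma decompC:
  assumes B: "Bpart u B" and S: "finite S" "S \<subseteq> extensional F"
  shows "card {x\<in>{1..n}. rb B x \<in> S} = (\<Sum>\<phi>\<in>S. card (Cs B \<phi>))"
proof -
  have eq: "{x\<in>{1..n}. rb B x \<in> S} = (\<Union>\<phi>\<in>S. Cs B \<phi>)"
    using Cs_eq[OF B] S(2) by auto
  have "card (\<Union>\<phi>\<in>S. Cs B \<phi>) = (\<Sum>\<phi>\<in>S. card (Cs B \<phi>))"
  proof (rule card_UN_disjoint)
    show "\<forall>a\<in>S. \<forall>b\<in>S. a \<noteq> b \<longrightarrow> Cs B a \<inter> Cs B b = {}"
    proof (intro ballI impI)
      fix a b assume "a \<in> S" "b \<in> S" "a \<noteq> b"
      moreover have "a \<in> extensional F" "b \<in> extensional F" using S(2) \<open>a \<in> S\<close> \<open>b \<in> S\<close> by auto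
      ultimately show "Cs B a \<inter> Cs B b = {}"
        using Cs_eq[OF B, of a] Cs_eq[OF B, of b] by auto
    qed
  qed (use S in \<open>auto simp: Cs_def\<close>)
  then show ?thesis unfolding eq .
qed

lemma rb_lt: assumes B: "Bpart u B" and x: "x \<in> {1..n}"
  shows "rb B x \<in> PiE F (\<lambda>_. {..<u})"
  unfolding rb_def using Bpart_lab_lt[OF B inv_in[OF x]] by auto

lemma marginal_card:
  assumes B: "Bpart u B" and f0: "f0 \<in> F"
  shows "card (B j) = (\<Sum>\<phi>\<in>{\<phi>\<in>PiE F (\<lambda>_. {..<u}). \<phi> f0 = j}. card (Cs B \<phi>))"
proof -
  let ?S = "{\<phi>\<in>PiE F (\<lambda>_. {..<u}). \<phi> f0 = j}"
  have fS: "finite ?S" by (rule finite_subset[of _ "PiE F (\<lambda>_. {..<u})"]) (auto intro: finite_PiE finF')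
  have eS: "?S \<subseteq> extensional F" by (auto simp: PiE_def)
  have "card (B j) = card (\<sigma> f0 ` B j)"
    using card_image[OF permutes_inj_on[OF perm]] by simp
  also have "\<sigma> f0 ` B j = {x\<in>{1..n}. rb B x \<in> ?S}"
  proof (intro set_eqI iffI)
    fix x assume x: "x \<in> \<sigma> f0 ` B j"
    then obtain y where y: "y \<in> B j" "x = \<sigma> f0 y" by blast
    have "y \<in> {1..n}" using y(1) B unfolding Bpart_def by blast
    then have xs: "x \<in> {1..n}" using y(2) permutes_in_image[OF perm] by simp
    have "inv (\<sigma> f0) x \<in> B j" using x img_iff by simp
    then have "rb B x f0 = j" using f0 Bpart_lab_eq[OF B] by (simp add: rb_def)
    then show "x \<in> {x\<in>{1..n}. rb B x \<in> ?S}" using xs rb_lt[OF B xs] by simp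
  next
    fix x assume x: "x \<in> {x\<in>{1..n}. rb B x \<in> ?S}"
    then have xs: "x \<in> {1..n}" and "rb B x f0 = j" by auto
    then have "lab B (inv (\<sigma> f0) x) = j" using f0 by (simp add: rb_def)
    then have "inv (\<sigma> f0) x \<in> B j" using Bpart_lab[OF B inv_in[OF xs], of f0] by simp
    then show "x \<in> \<sigma> f0 ` B j" using img_iff by simp
  qed
  also have "card \<dots> = (\<Sum>\<phi>\<in>?S. card (Cs B \<phi>))" using decompC[OF B fS eS] .
  finally show ?thesis .
qed

definition merge :: "(nat \<Rightarrow> nat) \<Rightarrow> nat \<Rightarrow> (nat \<Rightarrow> nat set) \<Rightarrow> nat \<Rightarrow> nat set" where
  "merge c u B k = (\<Union>j\<in>{j. j < u \<and> c j = k}. B j)"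

lemma merge_Bpart:
  assumes B: "Bpart u B" and c: "\<And>j. j < u \<Longrightarrow> c j < u'"
  shows "Bpart u' (merge c u B)"
  unfolding Bpart_def
proof (intro conjI allI impI)
  show "merge c u B i \<subseteq> {1..n}" for i using B unfolding Bpart_def merge_def by blast
  show "disjoint_family (merge c u B)"
    unfolding disjoint_family_on_def merge_def
  proof (intro ballI impI)
    fix a b :: nat assume "a \<noteq> b"
    show "(\<Union>j\<in>{j. j < u \<and> c j = a}. B j) \<inter> (\<Union>j\<in>{j. j < u \<and> c j = b}. B j) = {}"
    proof (rule ccontr)
      assume "\<not> ?thesis"
      then obtain x j j' where "j < u" "c j = a" "j' < u" "c j' = b" "x \<in> B j" "x \<in> B j'" by blast
      then show False using Bpart_lab_eq[OF B] \<open>a \<noteq> b\<close> by metis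
    qed
  qed
  show "(\<Union>i. merge c u B i) = {1..n}"
  proof (intro set_eqI iffI)
    fix x assume "x \<in> (\<Union>i. merge c u B i)"
    then show "x \<in> {1..n}" using B unfolding Bpart_def merge_def by blast
  next
    fix x assume x: "x \<in> {1..n}"
    then have "x \<in> B (lab B x)" "lab B x < u" using Bpart_lab[OF B] Bpart_lab_lt[OF B] by auto
    then have "x \<in> merge c u B (c (lab B x))" unfolding merge_def by blast
    then show "x \<in> (\<Union>i. merge c u B i)" by blast
  qed
  show "merge c u B i = {}" if "u' \<le> i" for i
    using that c unfolding merge_def by force
qed

lemma merge_lab:
  assumes B: "Bpart u B" and c: "\<And>j. j < u \<Longrightarrow> c j < u'" and x: "x \<in> {1..n}"
  shows "lab (merge c u B) x = c (lab B x)"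
proof -
  have "x \<in> B (lab B x)" "lab B x < u" using Bpart_lab[OF B x] Bpart_lab_lt[OF B x] by auto
  then have "x \<in> merge c u B (c (lab B x))" unfolding merge_def by blast
  moreover have Bm: "Bpart u' (merge c u B)" by (rule merge_Bpart) (use B c in auto)
  ultimately show ?thesis using Bpart_lab_eq[OF Bm] by blast
qed

lemma merge_Cs:
  assumes B: "Bpart u B" and c: "\<And>j. j < u \<Longrightarrow> c j < u'" and \<psi>: "\<psi> \<in> extensional F"
  shows "Cs (merge c u B) \<psi> = {x\<in>{1..n}. rb B x \<in> {\<phi>\<in>PiE F (\<lambda>_. {..<u}). restrict (c \<circ> \<phi>) F = \<psi>}}"
proof -
  have r: "rb (merge c u B) x = restrict (c \<circ> rb B x) F" if x: "x \<in> {1..n}" for x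
    unfolding rb_def using merge_lab[OF B c inv_in[OF x]] by auto
  have e: "Cs (merge c u B) \<psi> = {x\<in>{1..n}. rb (merge c u B) x = \<psi>}"
    by (rule Cs_eq[OF merge_Bpart[of u B c u', OF B c] \<psi>])
  show ?thesis unfolding e
  proof (intro Collect_cong conj_cong refl)
    fix x assume x: "x \<in> {1..n}"
    show "(rb (merge c u B) x = \<psi>) = (rb B x \<in> {\<phi> \<in> F \<rightarrow>\<^sub>E {..<u}. restrict (c \<circ> \<phi>) F = \<psi>})"
      using r[OF x] rb_lt[OF B x] by simp
  qed
qed

end

locale core = refine M T F \<gamma> \<delta> + cside F \<sigma> n
  for M :: "'x measure" and T :: "'g::group_add \<Rightarrow> 'x \<Rightarrow> 'x" and F \<gamma> \<delta> and \<sigma> :: "'g \<Rightarrow> nat \<Rightarrow> nat" and n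
begin

lemma dF_fin:
  assumes p: "is_partition M \<alpha>" and fp: "finite_part M \<alpha>" and B: "Bpart (part_len M \<alpha>) B"
  shows "dF M T F \<alpha> \<sigma> n B = (\<Sum>\<phi>\<in>PiE F (\<lambda>_. {..<part_len M \<alpha>}). \<bar>measure M (Dlt \<alpha> \<phi>) - real (card (Cs B \<phi>)) / real n\<bar>)"
proof -
  let ?g = "\<lambda>\<phi>. \<bar>measure M (Dlt \<alpha> \<phi>) - real (card (Cs B \<phi>)) / real n\<bar>"
  have "dF M T F \<alpha> \<sigma> n B = infsum ?g (F \<rightarrow>\<^sub>E (UNIV :: nat set))"
    unfolding dF_def Dlt_def Cs_def by simp
  also have "\<dots> = infsum ?g (PiE F (\<lambda>_. {..<part_len M \<alpha>}))"
  proof (rule infsum_cong_neutral)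
    fix \<phi> assume \<phi>: "\<phi> \<in> (F \<rightarrow>\<^sub>E (UNIV :: nat set)) - PiE F (\<lambda>_. {..<part_len M \<alpha>})"
    then obtain f where f: "f \<in> F" "\<phi> f \<ge> part_len M \<alpha>" by (auto simp: PiE_def Pi_def not_less)
    have "T f ` \<alpha> (\<phi> f) \<in> null_sets M" using T_img_null part_len_null[OF p fp f(2)] by blast
    moreover have "Dlt \<alpha> \<phi> \<subseteq> T f ` \<alpha> (\<phi> f)" using f(1) unfolding Dlt_def by blast
    ultimately have "Dlt \<alpha> \<phi> \<in> null_sets M" using Dlt_sets[OF p] null_sets_subset by blast
    then have m0: "measure M (Dlt \<alpha> \<phi>) = 0" by (simp add: null_sets_def measure_def)
    have "B (\<phi> f) = {}" using B f(2) unfolding Bpart_def by blast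
    then have "Cs B \<phi> = {}" using f(1) unfolding Cs_def by blast
    then show "?g \<phi> = 0" using m0 by simp
  qed auto
  also have "\<dots> = (\<Sum>\<phi>\<in>PiE F (\<lambda>_. {..<part_len M \<alpha>}). ?g \<phi>)"
    by (rule infsum_finite) (auto intro: finite_PiE finF)
  finally show ?thesis .
qed

lemma fibC:
  assumes B: "Bpart uD B" and \<psi>: "\<psi> \<in> extensional F"
  shows "card (Cs (merge c uD B) \<psi>) = (\<Sum>\<phi>\<in>fib \<psi>. card (Cs B \<phi>))"
proof -
  have fS: "finite (fib \<psi>)" unfolding fib_def by (rule finite_subset[of _ "PiE F (\<lambda>_. {..<uD})"]) (auto intro: finite_PiE finF)
  have eS: "fib \<psi> \<subseteq> extensional F" unfolding fib_def by (auto simp: PiE_def)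
  have "Cs (merge c uD B) \<psi> = {x\<in>{1..n}. rb B x \<in> fib \<psi>}"
    unfolding fib_def by (rule merge_Cs[OF B c_lt \<psi>])
  then show ?thesis using decompC[OF B fS eS] by simp
qed

lemma merge_dF:
  assumes B: "Bpart uD B"
  shows "dF M T F \<gamma> \<sigma> n (merge c uD B) \<le> dF M T F \<delta> \<sigma> n B"
proof -
  let ?h = "\<lambda>\<phi>. measure M (Dlt \<delta> \<phi>) - real (card (Cs B \<phi>)) / real n"
  let ?P = "PiE F (\<lambda>_. {..<uD})" and ?Q = "PiE F (\<lambda>_. {..<uG})"
  have Bm: "Bpart uG (merge c uD B)" by (rule merge_Bpart[OF B c_lt])
  have "dF M T F \<gamma> \<sigma> n (merge c uD B) = (\<Sum>\<psi>\<in>?Q. \<bar>measure M (Dlt \<gamma> \<psi>) - real (card (Cs (merge c uD B) \<psi>)) / real n\<bar>)"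
    by (rule dF_fin[OF pG fG Bm])
  also have "\<dots> = (\<Sum>\<psi>\<in>?Q. \<bar>\<Sum>\<phi>\<in>fib \<psi>. ?h \<phi>\<bar>)"
  proof (rule sum.cong[OF refl])
    fix \<psi> assume "\<psi> \<in> ?Q"
    then have e: "\<psi> \<in> extensional F" by (auto simp: PiE_def)
    show "\<bar>measure M (Dlt \<gamma> \<psi>) - real (card (Cs (merge c uD B) \<psi>)) / real n\<bar> = \<bar>\<Sum>\<phi>\<in>fib \<psi>. ?h \<phi>\<bar>"
      using fib_meas[OF e] fibC[OF B e]
      by (simp add: sum_subtractf sum_divide_distrib)
  qed
  also have "\<dots> \<le> (\<Sum>\<psi>\<in>?Q. \<Sum>\<phi>\<in>fib \<psi>. \<bar>?h \<phi>\<bar>)"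
    by (intro sum_mono sum_abs)
  also have "\<dots> = (\<Sum>\<phi>\<in>?P. \<bar>?h \<phi>\<bar>)"
  proof -
    have "(\<Sum>\<psi>\<in>?Q. \<Sum>\<phi>\<in>{\<phi>. \<phi> \<in> ?P \<and> restrict (c \<circ> \<phi>) F = \<psi>}. \<bar>?h \<phi>\<bar>) = (\<Sum>\<phi>\<in>?P. \<bar>?h \<phi>\<bar>)"
      by (rule sum.group) (auto intro: finite_PiE finF simp: c_lt)
    then show ?thesis unfolding fib_def by simp
  qed
  also have "\<dots> = dF M T F \<delta> \<sigma> n B" using dF_fin[OF pD fD B] by simp
  finally show ?thesis .
qed

lemma marginal:
  assumes B: "Bpart uD B" and f0: "f0 \<in> F"
  shows "(\<Sum>j<uD. \<bar>real (card (B j)) / real n - measure M (\<delta> j)\<bar>) \<le> dF M T F \<delta> \<sigma> n B"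
proof -
  let ?h = "\<lambda>\<phi>. measure M (Dlt \<delta> \<phi>) - real (card (Cs B \<phi>)) / real n"
  let ?P = "PiE F (\<lambda>_. {..<uD})"
  let ?S = "\<lambda>j. {\<phi>. \<phi> \<in> ?P \<and> \<phi> f0 = j}"
  have "(\<Sum>j<uD. \<bar>real (card (B j)) / real n - measure M (\<delta> j)\<bar>) = (\<Sum>j<uD. \<bar>\<Sum>\<phi>\<in>?S j. ?h \<phi>\<bar>)"
  proof (rule sum.cong[OF refl])
    fix j
    have "\<bar>real (card (B j)) / real n - measure M (\<delta> j)\<bar> = \<bar>measure M (\<delta> j) - real (card (B j)) / real n\<bar>"
      by simp
    also have "\<dots> = \<bar>\<Sum>\<phi>\<in>?S j. ?h \<phi>\<bar>"
      using marginal_meas[OF pD fD f0, of j] marginal_card[OF B f0, of j]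
      by (simp add: sum_subtractf sum_divide_distrib)
    finally show "\<bar>real (card (B j)) / real n - measure M (\<delta> j)\<bar> = \<bar>\<Sum>\<phi>\<in>?S j. ?h \<phi>\<bar>" .
  qed
  also have "\<dots> \<le> (\<Sum>j<uD. \<Sum>\<phi>\<in>?S j. \<bar>?h \<phi>\<bar>)"
    by (intro sum_mono sum_abs)
  also have "\<dots> = (\<Sum>\<phi>\<in>?P. \<bar>?h \<phi>\<bar>)"
    by (rule sum.group) (use f0 in \<open>auto intro: finite_PiE finF\<close>)
  also have "\<dots> = dF M T F \<delta> \<sigma> n B" using dF_fin[OF pD fD B] by simp
  finally show ?thesis .
qed

end

context refine begin

definition J :: "nat \<Rightarrow> nat set" where "J k = {j. j < uD \<and> c j = k}"

lemma finJ: "finite (J k)" unfolding J_def by auto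

definition pp :: "real \<Rightarrow> nat \<Rightarrow> real" where
  "pp \<eta> j = (measure M (\<delta> j) + \<eta>) / (measure M (\<gamma> (c j)) + \<eta> * real (card (J (c j))))"

lemma pp_pos: assumes "\<eta> > 0" "j < uD" shows "pp \<eta> j > 0"
proof -
  have "j \<in> J (c j)" using assms(2) by (simp add: J_def)
  then have "card (J (c j)) \<ge> 1" using finJ by (metis One_nat_def Suc_leI card_gt_0_iff empty_iff)
  then have "measure M (\<gamma> (c j)) + \<eta> * real (card (J (c j))) > 0"
    using assms(1) by (simp add: add_nonneg_pos)
  moreover have "measure M (\<delta> j) + \<eta> > 0" using assms(1) by (simp add: add_nonneg_pos)
  ultimately show ?thesis unfolding pp_def by simp
qed

lemma sum_pp: assumes "\<eta> > 0" "J k \<noteq> {}" shows "(\<Sum>j\<in>J k. pp \<eta> j) = 1"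
proof -
  let ?D = "measure M (\<gamma> k) + \<eta> * real (card (J k))"
  have D: "?D > 0" using assms finJ by (simp add: add_nonneg_pos card_gt_0_iff)
  have "(\<Sum>j\<in>J k. pp \<eta> j) = (\<Sum>j\<in>J k. (measure M (\<delta> j) + \<eta>) / ?D)"
    by (rule sum.cong) (auto simp: pp_def J_def)
  also have "\<dots> = (\<Sum>j\<in>J k. measure M (\<delta> j) + \<eta>) / ?D" by (simp add: sum_divide_distrib)
  also have "(\<Sum>j\<in>J k. measure M (\<delta> j) + \<eta>) = ?D"
    using gamma_meas[of k] by (simp add: sum.distrib J_def mult.commute)
  finally show ?thesis using D by simp
qed

definition CC :: "real \<Rightarrow> real" where "CC \<eta> = (\<Sum>j<uD. measure M (\<delta> j) * (- ln (pp \<eta> j)))"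
definition LL :: "real \<Rightarrow> real" where "LL \<eta> = (\<Sum>j<uD. \<bar>ln (pp \<eta> j)\<bar>)"

end

context core begin

lemma Bpart_finite: "finite {B. Bpart u B}"
proof -
  have "{B. Bpart u B} \<subseteq> (\<lambda>g i. if i < u then g i else {}) ` PiE {..<u} (\<lambda>_. Pow {1..n})"
  proof
    fix B assume "B \<in> {B. Bpart u B}"
    then have B: "Bpart u B" by simp
    have "B = (\<lambda>i. if i < u then restrict B {..<u} i else {})"
      using B unfolding Bpart_def by (auto simp: fun_eq_iff)
    moreover have "restrict B {..<u} \<in> PiE {..<u} (\<lambda>_. Pow {1..n})"
      using B unfolding Bpart_def by auto
    ultimately show "B \<in> (\<lambda>g i. if i < u then g i else {}) ` PiE {..<u} (\<lambda>_. Pow {1..n})"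
      by (rule image_eqI)
  qed
  moreover have "finite (PiE {..<u} (\<lambda>_. Pow {1..n}))" by (auto intro: finite_PiE)
  ultimately show ?thesis by (rule finite_subset[OF _ finite_imageI])
qed

lemma Bpart_eq_on:
  assumes "Bpart u B1" "Bpart u B2" "\<And>x. x \<in> {1..n} \<Longrightarrow> lab B1 x = lab B2 x"
  shows "B1 = B2"
proof
  fix j
  have "B1 j = {x\<in>{1..n}. lab B1 x = j}" if "Bpart u B1" for B1 :: "nat \<Rightarrow> nat set" and j
    using that Bpart_lab[OF that] Bpart_lab_eq[OF that] unfolding Bpart_def by blast
  then have "B1 j = {x\<in>{1..n}. lab B1 x = j}" "B2 j = {x\<in>{1..n}. lab B2 x = j}"
    using assms(1,2) by blast+
  then show "B1 j = B2 j" using assms(3) by auto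
qed

lemma fiber_bound:
  assumes \<eta>: "\<eta> > 0" and \<epsilon>: "\<epsilon> \<ge> 0"
  shows "real (card {B. Bpart uD B \<and> dF M T F \<delta> \<sigma> n B \<le> \<epsilon> \<and> merge c uD B = B'})
          \<le> exp (real n * (CC \<eta> + \<epsilon> * LL \<eta>))"
proof (cases "{B. Bpart uD B \<and> dF M T F \<delta> \<sigma> n B \<le> \<epsilon> \<and> merge c uD B = B'} = {}")
  case True then show ?thesis by (simp only: True card.empty) simp
next
  case False
  define Fb where "Fb = {B. Bpart uD B \<and> dF M T F \<delta> \<sigma> n B \<le> \<epsilon> \<and> merge c uD B = B'}"
  define K where "K = CC \<eta> + \<epsilon> * LL \<eta>"
  from False obtain B0 where B0: "B0 \<in> Fb" unfolding Fb_def by blast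
  have finFb: "finite Fb" unfolding Fb_def by (rule finite_subset[OF _ Bpart_finite[of uD]]) auto
  define lb where "lb B = restrict (lab B) {1..n}" for B :: "nat \<Rightarrow> nat set"
  define PS where "PS = PiE {1..n} (\<lambda>x. J (lab B' x))"
  have labB': "lab B' x = c (lab B x)" if "B \<in> Fb" "x \<in> {1..n}" for B x
    using merge_lab[of uD B c uG x] that c_lt unfolding Fb_def by auto
  have lbPS: "lb B \<in> PS" if "B \<in> Fb" for B
  proof -
    have "lab B x \<in> J (lab B' x)" if x: "x \<in> {1..n}" for x
      using labB'[OF \<open>B \<in> Fb\<close> x] Bpart_lab_lt[of uD B x] \<open>B \<in> Fb\<close> x unfolding Fb_def J_def by auto
    then show ?thesis unfolding lb_def PS_def by auto
  qed
  have inj: "inj_on lb Fb"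
  proof (rule inj_onI)
    fix B1 B2 assume "B1 \<in> Fb" "B2 \<in> Fb" "lb B1 = lb B2"
    then show "B1 = B2" using Bpart_eq_on[of uD B1 B2] unfolding Fb_def lb_def
      by (metis (mono_tags, lifting) mem_Collect_eq restrict_apply')
  qed
  define W where "W g = (\<Prod>x\<in>{1..n}. pp \<eta> (g x))" for g :: "nat \<Rightarrow> nat"
  have Jne: "J (lab B' x) \<noteq> {}" if "x \<in> {1..n}" for x
  proof -
    have "lab B0 x \<in> J (lab B' x)" using labB'[OF B0 that] Bpart_lab_lt[of uD B0 x] B0 that
      unfolding Fb_def J_def by auto
    then show ?thesis by blast
  qed
  have Jlt: "j < uD" if "j \<in> J k" for j k using that by (simp add: J_def)
  have Wnn: "W g \<ge> 0" if "g \<in> PS" for g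
    unfolding W_def
  proof (rule prod_nonneg)
    fix x assume x: "x \<in> {1..n}"
    then have "g x \<in> J (lab B' x)" using that unfolding PS_def by blast
    then show "0 \<le> pp \<eta> (g x)" using pp_pos[OF \<eta> Jlt] less_imp_le by blast
  qed
  have sumW: "(\<Sum>g\<in>PS. W g) = 1"
  proof -
    have "(\<Sum>g\<in>PS. W g) = (\<Prod>x\<in>{1..n}. \<Sum>j\<in>J (lab B' x). pp \<eta> j)"
      unfolding W_def PS_def by (rule prod_sum_PiE[symmetric]) (auto simp: finJ)
    also have "\<dots> = 1" using sum_pp[OF \<eta> Jne] by simp
    finally show ?thesis .
  qed
  have finPS: "finite PS" unfolding PS_def by (auto intro: finite_PiE simp: finJ)
  have lower: "W (lb B) \<ge> exp (- (real n * K))" if B: "B \<in> Fb" for B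
  proof -
    have BP: "Bpart uD B" and dFB: "dF M T F \<delta> \<sigma> n B \<le> \<epsilon>" using B unfolding Fb_def by auto
    have lbx: "lb B x = lab B x" if "x \<in> {1..n}" for x using that by (simp add: lb_def)
    have ppos: "pp \<eta> (lab B x) > 0" if "x \<in> {1..n}" for x
      using pp_pos[OF \<eta> Bpart_lab_lt[OF BP that]] .
    have "W (lb B) = (\<Prod>x\<in>{1..n}. exp (ln (pp \<eta> (lab B x))))"
      unfolding W_def using ppos lbx by (intro prod.cong) auto
    also have "\<dots> = exp (\<Sum>x\<in>{1..n}. ln (pp \<eta> (lab B x)))" by (simp add: exp_sum)
    finally have W1: "W (lb B) = exp (\<Sum>x\<in>{1..n}. ln (pp \<eta> (lab B x)))" .
    have "(\<Sum>x\<in>{1..n}. ln (pp \<eta> (lab B x))) = (\<Sum>j<uD. \<Sum>x\<in>{x. x \<in> {1..n} \<and> lab B x = j}. ln (pp \<eta> (lab B x)))"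
      by (rule sum.group[symmetric]) (use Bpart_lab_lt[OF BP] in auto)
    also have "\<dots> = (\<Sum>j<uD. real (card (B j)) * ln (pp \<eta> j))"
    proof (rule sum.cong[OF refl])
      fix j
      have e: "{x. x \<in> {1..n} \<and> lab B x = j} = B j"
        using BP Bpart_lab[OF BP] Bpart_lab_eq[OF BP] unfolding Bpart_def by blast
      have "(\<Sum>x\<in>B j. ln (pp \<eta> (lab B x))) = (\<Sum>x\<in>B j. ln (pp \<eta> j))"
        by (rule sum.cong) (auto simp: Bpart_lab_eq[OF BP])
      then show "(\<Sum>x\<in>{x. x \<in> {1..n} \<and> lab B x = j}. ln (pp \<eta> (lab B x))) = real (card (B j)) * ln (pp \<eta> j)"
        by (subst e) simp
    qed
    finally have S1: "(\<Sum>x\<in>{1..n}. ln (pp \<eta> (lab B x))) = (\<Sum>j<uD. real (card (B j)) * ln (pp \<eta> j))" .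
    have bound: "(\<Sum>j<uD. real (card (B j)) * (- ln (pp \<eta> j))) \<le> real n * K"
    proof (cases "n = 0")
      case True
      then have "B j = {}" for j using BP unfolding Bpart_def by auto
      then show ?thesis using True by simp
    next
      case False
      then have npos: "real n > 0" by simp
      obtain f0 where f0: "f0 \<in> F" using neF by blast
      have Lb: "\<bar>ln (pp \<eta> j)\<bar> \<le> LL \<eta>" if "j < uD" for j
        unfolding LL_def using that by (intro member_le_sum) auto
      have "(\<Sum>j<uD. real (card (B j)) * (- ln (pp \<eta> j)))
          = real n * (\<Sum>j<uD. (real (card (B j)) / real n) * (- ln (pp \<eta> j)))"
        using npos by (simp add: sum_distrib_left)
      also have "(\<Sum>j<uD. (real (card (B j)) / real n) * (- ln (pp \<eta> j)))
          = CC \<eta> + (\<Sum>j<uD. (real (card (B j)) / real n - measure M (\<delta> j)) * (- ln (pp \<eta> j)))"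
        unfolding CC_def by (simp add: sum.distrib[symmetric] algebra_simps)
      also have "(\<Sum>j<uD. (real (card (B j)) / real n - measure M (\<delta> j)) * (- ln (pp \<eta> j)))
          \<le> (\<Sum>j<uD. \<bar>real (card (B j)) / real n - measure M (\<delta> j)\<bar> * LL \<eta>)"
      proof (rule sum_mono)
        fix j assume "j \<in> {..<uD}"
        then have "\<bar>ln (pp \<eta> j)\<bar> \<le> LL \<eta>" using Lb by simp
        then show "(real (card (B j)) / real n - measure M (\<delta> j)) * (- ln (pp \<eta> j))
            \<le> \<bar>real (card (B j)) / real n - measure M (\<delta> j)\<bar> * LL \<eta>"
        proof -
          let ?a = "real (card (B j)) / real n - measure M (\<delta> j)"
          have "?a * (- ln (pp \<eta> j)) \<le> \<bar>?a * (- ln (pp \<eta> j))\<bar>" by (rule abs_ge_self)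
          also have "\<dots> = \<bar>?a\<bar> * \<bar>ln (pp \<eta> j)\<bar>" by (simp add: abs_mult)
          also have "\<dots> \<le> \<bar>?a\<bar> * LL \<eta>" by (rule mult_left_mono) (use \<open>\<bar>ln (pp \<eta> j)\<bar> \<le> LL \<eta>\<close> in auto)
          finally show ?thesis .
        qed
      qed
      also have "\<dots> = (\<Sum>j<uD. \<bar>real (card (B j)) / real n - measure M (\<delta> j)\<bar>) * LL \<eta>"
        by (simp add: sum_distrib_right)
      also have "\<dots> \<le> \<epsilon> * LL \<eta>"
        using marginal[OF BP f0] dFB by (intro mult_right_mono) (auto simp: LL_def)
      finally show ?thesis unfolding K_def using npos by (simp add: mult_left_mono)
    qed
    have "- (real n * K) \<le> (\<Sum>x\<in>{1..n}. ln (pp \<eta> (lab B x)))"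
      using S1 bound by (simp add: sum_negf)
    then show ?thesis unfolding W1 by simp
  qed
  have "real (card Fb) * exp (- (real n * K)) = (\<Sum>B\<in>Fb. exp (- (real n * K)))" by simp
  also have "\<dots> \<le> (\<Sum>B\<in>Fb. W (lb B))" by (intro sum_mono lower)
  also have "\<dots> = (\<Sum>g\<in>lb ` Fb. W g)" using sum.reindex[OF inj, of W] by simp
  also have "\<dots> \<le> (\<Sum>g\<in>PS. W g)"
    by (rule sum_mono2[OF finPS]) (use lbPS Wnn in auto)
  also have "\<dots> = 1" by (rule sumW)
  finally have "real (card Fb) * exp (- (real n * K)) \<le> 1" .
  then have "real (card Fb) \<le> exp (real n * K)"
    by (simp add: exp_minus field_simps)
  then show ?thesis unfolding Fb_def K_def .
qed

end

lemma mono_at_right_tendsto: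
  fixes g :: "real \<Rightarrow> ereal"
  assumes mono: "\<And>a b. 0 < a \<Longrightarrow> a \<le> b \<Longrightarrow> g a \<le> g b"
  shows "(g \<longlongrightarrow> (INF e\<in>{0<..}. g e)) (at_right 0)"
proof (rule order_tendstoI)
  fix a assume a: "a < (INF e\<in>{0<..}. g e)"
  have "\<forall>y>0. y < 1 \<longrightarrow> a < g y"
  proof (intro allI impI)
    fix y :: real assume "0 < y" "y < 1"
    then have "(INF e\<in>{0<..}. g e) \<le> g y" by (intro INF_lower) auto
    then show "a < g y" using a by simp
  qed
  then show "eventually (\<lambda>x. a < g x) (at_right 0)"
    unfolding eventually_at_right_field by (intro exI[of _ 1]) auto
next
  fix a assume a: "(INF e\<in>{0<..}. g e) < a"
  then obtain e where e: "e > 0" "g e < a" by (auto simp: INF_less_iff)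
  have "\<forall>y>0. y < e \<longrightarrow> g y < a"
    using mono e by (meson less_imp_le order_le_less_trans)
  then show "eventually (\<lambda>x. g x < a) (at_right 0)"
    unfolding eventually_at_right_field using e(1) by blast
qed

lemma mono_Lim:
  fixes g :: "real \<Rightarrow> ereal"
  assumes mono: "\<And>a b. 0 < a \<Longrightarrow> a \<le> b \<Longrightarrow> g a \<le> g b"
  shows "(g \<longlongrightarrow> Lim (at_right 0) g) (at_right 0)"
proof -
  have t: "(g \<longlongrightarrow> (INF e\<in>{0<..}. g e)) (at_right 0)"
    by (rule mono_at_right_tendsto[of g]) (use mono in auto)
  then have "Lim (at_right 0) g = (INF e\<in>{0<..}. g e)" by (intro tendsto_Lim) auto
  then show ?thesis using t by simp
qed

definition vl :: "nat \<Rightarrow> nat \<Rightarrow> ereal" where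
  "vl c n = (if c = 0 then -\<infinity> else ereal (ln (real c) / real n))"

lemma vl_mono: "c \<le> c' \<Longrightarrow> vl c n \<le> vl c' n"
  unfolding vl_def by (auto intro!: divide_right_mono)

lemma sofic_H_fin_vl: "sofic_H_fin M T \<sigma> m F \<alpha> =
   Lim (at_right (0::real)) (\<lambda>\<epsilon>. limsup (\<lambda>i. vl (card (AP M T F \<alpha> (\<sigma> i) (m i) \<epsilon>)) (m i)))"
  unfolding sofic_H_fin_def vl_def Let_def by simp

context core begin

lemma AP_eq: "AP M T F \<alpha> \<sigma> n \<epsilon> = {B. Bpart (part_len M \<alpha>) B \<and> dF M T F \<alpha> \<sigma> n B \<le> \<epsilon>}"
  unfolding AP_def Bpart_def by auto

lemma AP_finite: "finite (AP M T F \<alpha> \<sigma> n \<epsilon>)"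
  unfolding AP_eq by (rule finite_subset[OF _ Bpart_finite]) auto

lemma count:
  assumes \<eta>: "\<eta> > 0" and \<epsilon>: "\<epsilon> \<ge> 0"
  shows "real (card (AP M T F \<delta> \<sigma> n \<epsilon>)) \<le> real (card (AP M T F \<gamma> \<sigma> n \<epsilon>)) * exp (real n * (CC \<eta> + \<epsilon> * LL \<eta>))"
proof -
  let ?A = "AP M T F \<delta> \<sigma> n \<epsilon>" and ?G = "AP M T F \<gamma> \<sigma> n \<epsilon>"
  let ?E = "exp (real n * (CC \<eta> + \<epsilon> * LL \<eta>))"
  have sub: "merge c uD ` ?A \<subseteq> ?G"
  proof
    fix B' assume "B' \<in> merge c uD ` ?A"
    then obtain B where B: "B \<in> ?A" "B' = merge c uD B" by blast
    then have BP: "Bpart uD B" and d: "dF M T F \<delta> \<sigma> n B \<le> \<epsilon>" unfolding AP_eq by auto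
    have "Bpart uG B'" using merge_Bpart[OF BP c_lt] B(2) by simp
    moreover have "dF M T F \<gamma> \<sigma> n B' \<le> \<epsilon>" using merge_dF[OF BP] d B(2) by simp
    ultimately show "B' \<in> ?G" unfolding AP_eq by simp
  qed
  have "real (card ?A) = (\<Sum>B\<in>?A. 1)" by simp
  also have "\<dots> = (\<Sum>B'\<in>merge c uD ` ?A. \<Sum>B\<in>{B. B \<in> ?A \<and> merge c uD B = B'}. 1)"
    by (rule sum.group[symmetric]) (auto intro: AP_finite)
  also have "\<dots> \<le> (\<Sum>B'\<in>merge c uD ` ?A. ?E)"
  proof (rule sum_mono)
    fix B' assume "B' \<in> merge c uD ` ?A"
    have "{B. B \<in> ?A \<and> merge c uD B = B'} = {B. Bpart uD B \<and> dF M T F \<delta> \<sigma> n B \<le> \<epsilon> \<and> merge c uD B = B'}"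
      unfolding AP_eq by auto
    then show "(\<Sum>B\<in>{B. B \<in> ?A \<and> merge c uD B = B'}. 1) \<le> ?E"
      using fiber_bound[OF \<eta> \<epsilon>, of B'] by simp
  qed
  also have "\<dots> = real (card (merge c uD ` ?A)) * ?E" by simp
  also have "\<dots> \<le> real (card ?G) * ?E"
    using card_mono[OF AP_finite sub] by (intro mult_right_mono) auto
  finally show ?thesis .
qed

lemma count_vl:
  assumes \<eta>: "\<eta> > 0" and \<epsilon>: "\<epsilon> \<ge> 0" and n: "n > 0"
  shows "vl (card (AP M T F \<delta> \<sigma> n \<epsilon>)) n \<le> vl (card (AP M T F \<gamma> \<sigma> n \<epsilon>)) n + ereal (CC \<eta> + \<epsilon> * LL \<eta>)"
proof -
  let ?a = "card (AP M T F \<delta> \<sigma> n \<epsilon>)" and ?b = "card (AP M T F \<gamma> \<sigma> n \<epsilon>)"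
  let ?K = "CC \<eta> + \<epsilon> * LL \<eta>"
  have cnt: "real ?a \<le> real ?b * exp (real n * ?K)" using count[OF \<eta> \<epsilon>] .
  show ?thesis
  proof (cases "?a = 0")
    case True then show ?thesis by (simp add: vl_def)
  next
    case False
    have b: "?b \<noteq> 0"
    proof
      assume "?b = 0"
      then have "real ?a \<le> 0" using cnt by simp
      then show False using False by simp
    qed
    have "ln (real ?a) \<le> ln (real ?b * exp (real n * ?K))"
      using cnt False by (subst ln_le_cancel_iff) auto
    also have "\<dots> = ln (real ?b) + real n * ?K" using b by (simp add: ln_mult)
    finally have "ln (real ?a) / real n \<le> ln (real ?b) / real n + ?K"
      using n by (simp add: field_simps)
    then show ?thesis using False b by (simp add: vl_def)
  qed
qed

end

context refine begin

lemma delta_le_gamma: "j < uD \<Longrightarrow> measure M (\<delta> j) \<le> measure M (\<gamma> (c j))"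
proof -
  assume j: "j < uD"
  have "measure M (\<delta> j) \<le> (\<Sum>j'\<in>{j'. j' < uD \<and> c j' = c j}. measure M (\<delta> j'))"
    by (rule member_le_sum) (use j in auto)
  then show ?thesis using gamma_meas[of "c j"] by simp
qed

lemma CC_tendsto:
  "(CC \<longlongrightarrow> part_entropy M \<delta> - part_entropy M \<gamma>) (at_right 0)"
proof -
  define D0 where "D0 = (\<Sum>j<uD. measure M (\<delta> j) * (- ln (measure M (\<delta> j) / measure M (\<gamma> (c j)))))"
  have "(CC \<longlongrightarrow> D0) (at_right 0)"
    unfolding CC_def[abs_def] D0_def
  proof (rule tendsto_sum)
    fix j assume j: "j \<in> {..<uD}"
    show "((\<lambda>\<eta>. measure M (\<delta> j) * - ln (pp \<eta> j)) \<longlongrightarrow>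
            measure M (\<delta> j) * - ln (measure M (\<delta> j) / measure M (\<gamma> (c j)))) (at_right 0)"
    proof (cases "measure M (\<delta> j) = 0")
      case True then show ?thesis by simp
    next
      case False
      then have dpos: "measure M (\<delta> j) > 0" using measure_nonneg[of M "\<delta> j"] by linarith
      then have gpos: "measure M (\<gamma> (c j)) > 0" using delta_le_gamma[of j] j by simp
      have "((\<lambda>\<eta>. pp \<eta> j) \<longlongrightarrow> (measure M (\<delta> j) + 0) / (measure M (\<gamma> (c j)) + 0 * real (card (J (c j))))) (at_right 0)"
        unfolding pp_def[abs_def] using gpos
        by (intro tendsto_intros tendsto_ident_at) auto
      then have t: "((\<lambda>\<eta>. pp \<eta> j) \<longlongrightarrow> measure M (\<delta> j) / measure M (\<gamma> (c j))) (at_right 0)" by simp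
      have "((\<lambda>\<eta>. ln (pp \<eta> j)) \<longlongrightarrow> ln (measure M (\<delta> j) / measure M (\<gamma> (c j)))) (at_right 0)"
        by (rule tendsto_ln[OF t]) (use dpos gpos in simp)
      from tendsto_mult[OF tendsto_const[of "measure M (\<delta> j)"] tendsto_minus[OF this]] show ?thesis by simp
    qed
  qed
  moreover have "D0 = part_entropy M \<delta> - part_entropy M \<gamma>"
  proof -
    have "D0 = (\<Sum>j<uD. - measure M (\<delta> j) * ln (measure M (\<delta> j))) + (\<Sum>j<uD. measure M (\<delta> j) * ln (measure M (\<gamma> (c j))))"
      unfolding D0_def sum.distrib[symmetric]
    proof (rule sum.cong[OF refl])
      fix j assume j: "j \<in> {..<uD}"
      show "measure M (\<delta> j) * - ln (measure M (\<delta> j) / measure M (\<gamma> (c j))) =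
            - measure M (\<delta> j) * ln (measure M (\<delta> j)) + measure M (\<delta> j) * ln (measure M (\<gamma> (c j)))"
      proof (cases "measure M (\<delta> j) = 0")
        case True then show ?thesis by simp
      next
        case False
        then have dpos: "measure M (\<delta> j) > 0" using measure_nonneg[of M "\<delta> j"] by linarith
        then have gpos: "measure M (\<gamma> (c j)) > 0" using delta_le_gamma[of j] j by simp
        show ?thesis using dpos gpos by (simp add: ln_div algebra_simps)
      qed
    qed
    also have "(\<Sum>j<uD. - measure M (\<delta> j) * ln (measure M (\<delta> j))) = part_entropy M \<delta>"
      using part_entropy_fin[OF fD] by simp
    also have "(\<Sum>j<uD. measure M (\<delta> j) * ln (measure M (\<gamma> (c j))))
        = (\<Sum>k<uG. \<Sum>j\<in>{j. j \<in> {..<uD} \<and> c j = k}. measure M (\<delta> j) * ln (measure M (\<gamma> (c j))))"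
      by (rule sum.group[symmetric]) (auto simp: c_lt)
    also have "\<dots> = (\<Sum>k<uG. measure M (\<gamma> k) * ln (measure M (\<gamma> k)))"
    proof (rule sum.cong[OF refl])
      fix k
      have "(\<Sum>j\<in>{j. j \<in> {..<uD} \<and> c j = k}. measure M (\<delta> j) * ln (measure M (\<gamma> (c j))))
          = (\<Sum>j\<in>{j. j < uD \<and> c j = k}. measure M (\<delta> j)) * ln (measure M (\<gamma> k))"
        by (simp add: sum_distrib_right)
      also have "\<dots> = measure M (\<gamma> k) * ln (measure M (\<gamma> k))" using gamma_meas[of k] by simp
      finally show "(\<Sum>j\<in>{j. j \<in> {..<uD} \<and> c j = k}. measure M (\<delta> j) * ln (measure M (\<gamma> (c j))))
          = measure M (\<gamma> k) * ln (measure M (\<gamma> k))" .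
    qed
    also have "\<dots> = - part_entropy M \<gamma>"
      using part_entropy_fin[OF fG] by (simp add: sum_negf)
    finally show ?thesis by simp
  qed
  ultimately show ?thesis by simp
qed

end

theorem core_fin:
  fixes M :: "'x measure" and T :: "'g::group_add \<Rightarrow> 'x \<Rightarrow> 'x"
    and \<sigma>s :: "nat \<Rightarrow> 'g \<Rightarrow> nat \<Rightarrow> nat" and m :: "nat \<Rightarrow> nat"
  assumes ms: "map_sequence \<sigma>s m" and mp: "mp_action M T" and F: "finite F" "F \<noteq> {}"
    and pG: "is_partition M \<gamma>" and fG: "finite_part M \<gamma>"
    and pD: "is_partition M \<delta>" and fD: "finite_part M \<delta>"
    and le: "part_le M \<gamma> \<delta>"
  shows "sofic_H_fin M T \<sigma>s m F \<delta> \<le> sofic_H_fin M T \<sigma>s m F \<gamma> + ereal (part_entropy M \<delta> - part_entropy M \<gamma>)"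
proof -
  interpret refine M T F \<gamma> \<delta>
    by unfold_locales (use mp F pG fG pD fD le in auto)
  have perm: "\<And>i g. \<sigma>s i g permutes {1..m i}" using ms unfolding map_sequence_def by blast
  have core_i: "\<And>i. core M T F \<gamma> \<delta> (\<sigma>s i) (m i)"
    by (intro_locales, unfold cside_def) (use perm F in blast)
  define g where "g \<alpha> \<epsilon> = limsup (\<lambda>i. vl (card (AP M T F \<alpha> (\<sigma>s i) (m i) \<epsilon>)) (m i))" for \<alpha> \<epsilon>
  have H: "sofic_H_fin M T \<sigma>s m F \<alpha> = Lim (at_right 0) (g \<alpha>)" for \<alpha>
    unfolding sofic_H_fin_vl g_def by simp
  have gmono: "g \<alpha> a \<le> g \<alpha> b" if "0 < a" "a \<le> b" for \<alpha> a b
    unfolding g_def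
  proof (intro Limsup_mono always_eventually allI vl_mono card_mono)
    fix i
    show "finite (AP M T F \<alpha> (\<sigma>s i) (m i) b)" by (rule core.AP_finite[OF core_i])
    show "AP M T F \<alpha> (\<sigma>s i) (m i) a \<subseteq> AP M T F \<alpha> (\<sigma>s i) (m i) b"
      unfolding AP_def using that by auto
  qed
  have t: "(g \<alpha> \<longlongrightarrow> sofic_H_fin M T \<sigma>s m F \<alpha>) (at_right 0)" for \<alpha>
    unfolding H by (rule mono_Lim) (rule gmono)
  have evm: "eventually (\<lambda>i. m i > 0) sequentially"
  proof -
    have "eventually (\<lambda>i. 1 \<le> m i) sequentially"
      using ms unfolding map_sequence_def filterlim_at_top by blast
    then show ?thesis by eventually_elim simp
  qed
  have stepA: "g \<delta> \<epsilon> \<le> g \<gamma> \<epsilon> + ereal (CC \<eta> + \<epsilon> * LL \<eta>)" if \<eta>: "\<eta> > 0" and \<epsilon>: "\<epsilon> > 0" for \<eta> \<epsilon>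
  proof -
    have "g \<delta> \<epsilon> \<le> limsup (\<lambda>i. vl (card (AP M T F \<gamma> (\<sigma>s i) (m i) \<epsilon>)) (m i) + ereal (CC \<eta> + \<epsilon> * LL \<eta>))"
      unfolding g_def
    proof (rule Limsup_mono)
      show "\<forall>\<^sub>F i in sequentially. vl (card (AP M T F \<delta> (\<sigma>s i) (m i) \<epsilon>)) (m i)
        \<le> vl (card (AP M T F \<gamma> (\<sigma>s i) (m i) \<epsilon>)) (m i) + ereal (CC \<eta> + \<epsilon> * LL \<eta>)"
        using evm
      proof eventually_elim
        case (elim i)
        show ?case by (rule core.count_vl[OF core_i \<eta>]) (use \<epsilon> elim in auto)
      qed
    qed
    also have "\<dots> = g \<gamma> \<epsilon> + ereal (CC \<eta> + \<epsilon> * LL \<eta>)"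
      unfolding g_def by (rule Limsup_add_ereal_right) auto
    finally show ?thesis .
  qed
  let ?HD = "sofic_H_fin M T \<sigma>s m F \<delta>" and ?HG = "sofic_H_fin M T \<sigma>s m F \<gamma>"
  have stepB: "?HD \<le> ?HG + ereal (CC \<eta>)" if \<eta>: "\<eta> > 0" for \<eta>
  proof (rule tendsto_le[of "at_right (0::real)"])
    show "(g \<delta> \<longlongrightarrow> ?HD) (at_right 0)" by (rule t)
    have "((\<lambda>\<epsilon>. ereal (CC \<eta> + \<epsilon> * LL \<eta>)) \<longlongrightarrow> ereal (CC \<eta> + 0 * LL \<eta>)) (at_right 0)"
      by (intro tendsto_intros tendsto_ident_at)
    then have t2: "((\<lambda>\<epsilon>. ereal (CC \<eta> + \<epsilon> * LL \<eta>)) \<longlongrightarrow> ereal (CC \<eta>)) (at_right 0)" by simp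
    show "((\<lambda>\<epsilon>. g \<gamma> \<epsilon> + ereal (CC \<eta> + \<epsilon> * LL \<eta>)) \<longlongrightarrow> ?HG + ereal (CC \<eta>)) (at_right 0)"
      by (rule tendsto_add_ereal_general[OF _ t t2]) auto
    show "eventually (\<lambda>\<epsilon>. g \<delta> \<epsilon> \<le> g \<gamma> \<epsilon> + ereal (CC \<eta> + \<epsilon> * LL \<eta>)) (at_right 0)"
      using eventually_at_right_less[of "0::real"] by eventually_elim (rule stepA[OF \<eta>])
  qed auto
  show ?thesis
  proof (rule tendsto_le[of "at_right (0::real)"])
    show "((\<lambda>\<eta>. ?HD) \<longlongrightarrow> ?HD) (at_right 0)" by simp
    show "((\<lambda>\<eta>. ?HG + ereal (CC \<eta>)) \<longlongrightarrow> ?HG + ereal (part_entropy M \<delta> - part_entropy M \<gamma>)) (at_right 0)"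
      by (rule tendsto_add_ereal_general[OF _ tendsto_const tendsto_ereal[OF CC_tendsto]]) auto
    show "eventually (\<lambda>\<eta>. ?HD \<le> ?HG + ereal (CC \<eta>)) (at_right 0)"
      using eventually_at_right_less[of "0::real"] by eventually_elim (rule stepB)
  qed auto
qed

context gsys begin

lemma measure_eq_null0:
  assumes "A \<in> sets M" "B \<in> sets M" "N \<in> null_sets M" "A - B \<subseteq> N" "B - A \<subseteq> N"
  shows "measure M A = measure M B"
proof (rule measure_eq_AE)
  show "AE x in M. (x \<in> A) = (x \<in> B)"
    using AE_not_in[OF assms(3)] by eventually_elim (use assms in auto)
qed (use assms in auto)

lemma null_union3:
  assumes "A \<in> sets M" "N1 \<in> null_sets M" "N2 \<in> null_sets M" "N3 \<in> null_sets M" "A \<subseteq> N1 \<union> N2 \<union> N3"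
  shows "A \<in> null_sets M"
proof -
  have "N1 \<union> N2 \<union> N3 \<in> null_sets M" using assms by auto
  then show ?thesis using assms(1,5) null_sets_subset by blast
qed

lemma chain_atom_conv:
  assumes ch: "is_chain M \<gamma>s \<gamma>" and p: "is_partition M \<gamma>" and pos: "measure M (\<gamma> k) > 0"
  shows "(\<lambda>n. measure M (\<gamma>s n (cmap M (\<gamma>s n) \<gamma> k))) \<longlonglongrightarrow> measure M (\<gamma> k)"
proof -
  define G where "G = \<gamma> k"
  define A where "A n = \<gamma>s n (cmap M (\<gamma>s n) \<gamma> k)" for n
  have pn: "is_partition M (\<gamma>s n)" and fn: "finite_part M (\<gamma>s n)" for n
    using ch unfolding is_chain_def by auto
  have len: "part_le M (\<gamma>s n) \<gamma>" for n using ch unfolding is_chain_def by auto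
  have lenS: "part_le M (\<gamma>s n) (\<gamma>s (Suc n))" for n using ch unfolding is_chain_def by auto
  have Gs: "G \<in> sets M" unfolding G_def using part_sets[OF p] .
  have As: "A n \<in> sets M" for n unfolding A_def using part_sets[OF pn] .
  have Gnn: "G \<notin> null_sets M" using pos unfolding G_def by (auto simp: null_sets_def measure_def)
  have i: "G - A n \<in> null_sets M" for n
    using cmap_null[OF pn fn p len, of k] Gs As unfolding G_def A_def by (auto simp: null_sets_def)
  have ii: "A (Suc n) - A n \<in> null_sets M" for n
  proof -
    obtain k' where k': "emeasure M (A (Suc n) - \<gamma>s n k') = 0"
      using lenS[of n] unfolding part_le_def A_def by blast
    have n1: "A (Suc n) - \<gamma>s n k' \<in> null_sets M" using k' As part_sets[OF pn] by (auto simp: null_sets_def)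
    show ?thesis
    proof (cases "k' = cmap M (\<gamma>s n) \<gamma> k")
      case True then show ?thesis using n1 unfolding A_def by simp
    next
      case False
      have "\<gamma>s n k' \<inter> A n = {}" using part_disj[OF pn] False unfolding A_def disjoint_family_on_def by auto
      then have "G \<subseteq> (G - A (Suc n)) \<union> (A (Suc n) - \<gamma>s n k') \<union> (G - A n)" by blast
      then have "G \<in> null_sets M" using null_union3[OF Gs i n1 i] by blast
      then show ?thesis using Gnn by simp
    qed
  qed
  define Zs where "Zs = (\<Union>n. A (Suc n) - A n)"
  have Zs: "Zs \<in> null_sets M" unfolding Zs_def using ii by auto
  define E where "E n = (\<Inter>n'\<in>{..n}. A n')" for n
  have Es: "E n \<in> sets M" for n unfolding E_def using As by auto
  have down: "x \<in> A n \<Longrightarrow> x \<notin> Zs \<Longrightarrow> n' \<le> n \<Longrightarrow> x \<in> A n'" for x n n'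
  proof (induction n arbitrary: n')
    case 0 then show ?case by simp
  next
    case (Suc n)
    have "x \<in> A n" using Suc.prems(1,2) unfolding Zs_def by blast
    then show ?case using Suc by (cases "n' = Suc n") auto
  qed
  have mE: "measure M (E n) = measure M (A n)" for n
  proof (rule measure_eq_null0[OF Es As Zs])
    show "E n - A n \<subseteq> Zs" unfolding E_def by auto
    show "A n - E n \<subseteq> Zs" unfolding E_def using down by blast
  qed
  define D where "D = (\<Inter>n. A n)"
  have Ds: "D \<in> sets M" unfolding D_def using As by auto
  have DE: "(\<Inter>n. E n) = D" unfolding E_def D_def by auto
  have "(\<lambda>n. measure M (E n)) \<longlonglongrightarrow> measure M (\<Inter>n. E n)"
  proof (rule finite_Lim_measure_decseq)
    show "range E \<subseteq> sets M" using Es by auto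
    show "decseq E" unfolding decseq_def E_def by auto
  qed
  then have lim: "(\<lambda>n. measure M (A n)) \<longlonglongrightarrow> measure M D" using mE DE by simp
  have Dsp: "D \<subseteq> space M" unfolding D_def using sets.sets_into_space[OF As] by blast
  let ?Gen = "\<Union>n. range (\<gamma>s n)"
  have P: "S \<in> sets M \<and> (D \<inter> S \<in> null_sets M \<or> D - S \<in> null_sets M)"
    if S: "S \<in> sigma_sets (space M) ?Gen" for S
    using S
  proof (induction rule: sigma_sets.induct)
    case (Basic a)
    then obtain n j where a: "a = \<gamma>s n j" by blast
    have as: "a \<in> sets M" using a part_sets[OF pn] by simp
    show ?case
    proof (cases "j = cmap M (\<gamma>s n) \<gamma> k")
      case True
      then have "D - a = {}" unfolding a D_def A_def by blast
      then have "D - a \<in> null_sets M" by (metis null_sets.empty_sets)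
      then show ?thesis using as by blast
    next
      case False
      then have "\<gamma>s n j \<inter> A n = {}" using part_disj[OF pn] unfolding A_def disjoint_family_on_def by auto
      then have "D \<inter> a = {}" unfolding a D_def by blast
      then have "D \<inter> a \<in> null_sets M" by (metis null_sets.empty_sets)
      then show ?thesis using as by blast
    qed
  next
    case Empty then show ?case by simp
  next
    case (Compl a)
    have "D \<inter> (space M - a) = D - a" "D - (space M - a) = D \<inter> a" using Dsp by auto
    then show ?case using Compl by auto
  next
    case (Union a)
    have us: "(\<Union>i. a i) \<in> sets M" using Union by auto
    show ?case
    proof (cases "\<exists>i. D - a i \<in> null_sets M")
      case True
      then obtain i where i: "D - a i \<in> null_sets M" by blast
      have "D - (\<Union>i. a i) \<in> null_sets M"
        by (rule null_sets_subset[OF i]) (use Ds us in auto)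
      then show ?thesis using us by simp
    next
      case False
      then have "\<And>i. D \<inter> a i \<in> null_sets M" using Union by blast
      then have n: "(\<Union>i. D \<inter> a i) \<in> null_sets M" by (rule null_sets_UN)
      have eq: "D \<inter> (\<Union>i. a i) = (\<Union>i. D \<inter> a i)" by blast
      have "D \<inter> (\<Union>i. a i) \<in> null_sets M" unfolding eq by (rule n)
      then show ?thesis using us by blast
    qed
  qed
  obtain S where S: "S \<in> sigma_sets (space M) ?Gen" "emeasure M ((S - G) \<union> (G - S)) = 0"
    using ch unfolding is_chain_def G_def by blast
  have Ss: "S \<in> sets M" using P[OF S(1)] by simp
  have nSG: "S - G \<in> null_sets M" "G - S \<in> null_sets M"
  proof -
    have "(S - G) \<union> (G - S) \<in> null_sets M" using S(2) Ss Gs by (auto simp: null_sets_def)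
    then show "S - G \<in> null_sets M" "G - S \<in> null_sets M"
      by (rule null_sets_subset, use Ss Gs in auto)+
  qed
  have GD: "G - D \<in> null_sets M"
  proof -
    have "(\<Union>n. G - A n) \<in> null_sets M" using i by (rule null_sets_UN)
    then show ?thesis by (rule null_sets_subset) (use Gs Ds in \<open>auto simp: D_def\<close>)
  qed
  have DG: "D - G \<in> null_sets M"
  proof (cases "D \<inter> S \<in> null_sets M")
    case True
    have "G \<subseteq> (G - D) \<union> (D \<inter> S) \<union> (G - S)" by blast
    then have "G \<in> null_sets M" using null_union3[OF Gs GD True nSG(2)] by blast
    then show ?thesis using Gnn by simp
  next
    case False
    then have n: "D - S \<in> null_sets M" using P[OF S(1)] by blast
    have "D - G \<subseteq> (D - S) \<union> (S - G) \<union> (S - G)" by blast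
    then show ?thesis using null_union3[OF _ n nSG(1) nSG(1)] Ds Gs by blast
  qed
  have "measure M D = measure M G"
    by (rule measure_eq_null0[OF Ds Gs null_sets.Un[OF DG GD]]) auto
  then show ?thesis using lim unfolding A_def G_def by simp
qed

end

context gsys begin

lemma cmap_sums:
  assumes pG: "is_partition M \<gamma>" and fG: "finite_part M \<gamma>" and pD: "is_partition M \<delta>"
    and le: "part_le M \<gamma> \<delta>"
  shows "(\<lambda>j. if cmap M \<gamma> \<delta> j = k then measure M (\<delta> j) else 0) sums measure M (\<gamma> k)"
proof -
  let ?c = "cmap M \<gamma> \<delta>"
  define A where "A j = (if ?c j = k then \<delta> j else {})" for j
  have As: "range A \<subseteq> sets M" unfolding A_def using part_sets[OF pD] by auto
  have Ad: "disjoint_family A" using part_disj[OF pD] unfolding A_def disjoint_family_on_def by auto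
  have "(\<lambda>j. measure M (A j)) sums measure M (\<Union>j. A j)"
    by (rule measure_UNION[OF As Ad]) simp
  moreover have "(\<lambda>j. measure M (A j)) = (\<lambda>j. if ?c j = k then measure M (\<delta> j) else 0)"
    unfolding A_def by auto
  moreover have "measure M (\<Union>j. A j) = measure M (\<gamma> k)"
  proof (rule measure_eq_null0)
    show "(\<Union>j. A j) \<in> sets M" using As by auto
    show "\<gamma> k \<in> sets M" using part_sets[OF pG] .
    define Z where "Z = (\<Union>j. \<delta> j - \<gamma> (?c j))"
    show "Z \<in> null_sets M" unfolding Z_def using cmap_null[OF pG fG pD le] part_sets[OF pD] part_sets[OF pG]
      by (intro null_sets_UN) (auto simp: null_sets_def)
    have key: "y \<in> \<gamma> k \<longleftrightarrow> y \<in> (\<Union>j. A j)" if y: "y \<in> space M" "y \<notin> Z" for y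
    proof -
      have yl: "y \<in> \<delta> (lab \<delta> y)" using part_lab[OF pD y(1)] .
      then have yg: "y \<in> \<gamma> (?c (lab \<delta> y))" using y(2) unfolding Z_def by blast
      have "y \<in> \<gamma> k \<longleftrightarrow> ?c (lab \<delta> y) = k"
        using yg part_lab_eq[OF pG] by metis
      also have "\<dots> \<longleftrightarrow> y \<in> (\<Union>j. A j)"
      proof
        assume "?c (lab \<delta> y) = k"
        then have "y \<in> A (lab \<delta> y)" using yl unfolding A_def by simp
        then show "y \<in> (\<Union>j. A j)" by blast
      next
        assume "y \<in> (\<Union>j. A j)"
        then obtain j where "y \<in> A j" by blast
        then have "?c j = k" "y \<in> \<delta> j" unfolding A_def by (auto split: if_splits)
        then show "?c (lab \<delta> y) = k" using part_lab_eq[OF pD, of y j] by simp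
      qed
      finally show ?thesis .
    qed
    have sp: "(\<Union>j. A j) \<subseteq> space M" using As sets.sets_into_space by blast
    show "(\<Union>j. A j) - \<gamma> k \<subseteq> Z" using key sp by blast
    show "\<gamma> k - (\<Union>j. A j) \<subseteq> Z" using key part_sub[OF pG] by blast
  qed
  ultimately show ?thesis by simp
qed

lemma entropy_series:
  assumes pG: "is_partition M \<gamma>" and fG: "finite_part M \<gamma>" and pD: "is_partition M \<delta>"
    and le: "part_le M \<gamma> \<delta>"
  shows "(\<lambda>j. measure M (\<delta> j) * (- ln (measure M (\<gamma> (cmap M \<gamma> \<delta> j))))) sums part_entropy M \<gamma>"
proof -
  let ?c = "cmap M \<gamma> \<delta>" and ?u = "part_len M \<gamma>"
  have "(\<lambda>j. \<Sum>k<?u. (if ?c j = k then measure M (\<delta> j) else 0) * (- ln (measure M (\<gamma> k))))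
      sums (\<Sum>k<?u. measure M (\<gamma> k) * (- ln (measure M (\<gamma> k))))"
    by (intro sums_sum sums_mult2 cmap_sums[OF pG fG pD le])
  moreover have "(\<lambda>j. \<Sum>k<?u. (if ?c j = k then measure M (\<delta> j) else 0) * (- ln (measure M (\<gamma> k))))
      = (\<lambda>j. measure M (\<delta> j) * (- ln (measure M (\<gamma> (?c j)))))"
  proof
    fix j
    have "(\<Sum>k<?u. (if ?c j = k then measure M (\<delta> j) else 0) * (- ln (measure M (\<gamma> k))))
        = (\<Sum>k<?u. if k = ?c j then measure M (\<delta> j) * (- ln (measure M (\<gamma> k))) else 0)"
      by (rule sum.cong) auto
    also have "\<dots> = measure M (\<delta> j) * (- ln (measure M (\<gamma> (?c j))))"
      using cmap_lt[OF pG fG pD le, of j] by (simp add: sum.delta)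
    finally show "(\<Sum>k<?u. (if ?c j = k then measure M (\<delta> j) else 0) * (- ln (measure M (\<gamma> k))))
        = measure M (\<delta> j) * (- ln (measure M (\<gamma> (?c j))))" .
  qed
  moreover have "(\<Sum>k<?u. measure M (\<gamma> k) * (- ln (measure M (\<gamma> k)))) = part_entropy M \<gamma>"
    using part_entropy_fin[OF fG] by simp
  ultimately show ?thesis by simp
qed

lemma gen_entropy:
  assumes ch: "is_chain M \<gamma>s \<gamma>" and p: "is_partition M \<gamma>"
    and sm: "summable (\<lambda>i. - measure M (\<gamma> i) * ln (measure M (\<gamma> i)))"
  shows "(\<lambda>n. part_entropy M (\<gamma>s n)) \<longlonglongrightarrow> part_entropy M \<gamma>"
proof -
  have pn: "is_partition M (\<gamma>s n)" and fn: "finite_part M (\<gamma>s n)" for n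
    using ch unfolding is_chain_def by auto
  have len: "part_le M (\<gamma>s n) \<gamma>" for n using ch unfolding is_chain_def by auto
  define A where "A k n = measure M (\<gamma>s n (cmap M (\<gamma>s n) \<gamma> k))" for k n
  define a where "a k n = measure M (\<gamma> k) * (- ln (A k n))" for k n
  define b where "b k = - measure M (\<gamma> k) * ln (measure M (\<gamma> k))" for k
  have Hn: "part_entropy M (\<gamma>s n) = (\<Sum>k. a k n)" for n
    using sums_unique[OF entropy_series[OF pn fn p len]] unfolding a_def A_def by simp
  have geA: "measure M (\<gamma> k) \<le> A k n" for k n
  proof -
    let ?B = "\<gamma>s n (cmap M (\<gamma>s n) \<gamma> k)"
    have Bs: "?B \<in> sets M" using part_sets[OF pn] .
    have n: "\<gamma> k - ?B \<in> null_sets M"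
      using cmap_null[OF pn fn p len, of k] part_sets[OF p] Bs by (auto simp: null_sets_def)
    have "measure M (\<gamma> k) \<le> measure M (?B \<union> (\<gamma> k - ?B))"
      by (rule finite_measure_mono) (use Bs part_sets[OF p, of k] in auto)
    also have "\<dots> = measure M ?B" by (rule measure_Un_null_set[OF Bs n])
    finally show ?thesis unfolding A_def .
  qed
  have leA: "A k n \<le> 1" for k n unfolding A_def by simp
  have lim: "(\<lambda>n. a k n) \<longlonglongrightarrow> b k" for k
  proof (cases "measure M (\<gamma> k) = 0")
    case True then show ?thesis unfolding a_def b_def by simp
  next
    case False
    then have pos: "measure M (\<gamma> k) > 0" using measure_nonneg[of M "\<gamma> k"] by linarith
    have "(\<lambda>n. A k n) \<longlonglongrightarrow> measure M (\<gamma> k)"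
      unfolding A_def by (rule chain_atom_conv[OF ch p pos])
    then have "(\<lambda>n. ln (A k n)) \<longlonglongrightarrow> ln (measure M (\<gamma> k))"
      by (rule tendsto_ln) (use pos in simp)
    from tendsto_mult[OF tendsto_const[of "measure M (\<gamma> k)"] tendsto_minus[OF this]]
    show ?thesis unfolding a_def b_def by simp
  qed
  have bound: "norm (a k n) \<le> b k" for k n
  proof (cases "measure M (\<gamma> k) = 0")
    case True then show ?thesis unfolding a_def b_def by simp
  next
    case False
    then have pos: "measure M (\<gamma> k) > 0" using measure_nonneg[of M "\<gamma> k"] by linarith
    have Apos: "A k n > 0" using geA[of k n] pos by simp
    have "ln (A k n) \<le> 0" using leA Apos by simp
    moreover have "ln (measure M (\<gamma> k)) \<le> ln (A k n)" using geA[of k n] pos Apos by (subst ln_le_cancel_iff) auto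
    ultimately have "0 \<le> a k n" "a k n \<le> b k"
      unfolding a_def b_def using pos by (auto intro: mult_left_mono simp: mult_nonneg_nonpos)
    then show ?thesis by simp
  qed
  have "eventually (\<lambda>n. summable (\<lambda>k. norm (a k n))) sequentially \<and> summable (\<lambda>n. norm (b n)) \<and>
        ((\<lambda>n. suminf (\<lambda>k. a k n)) \<longlongrightarrow> suminf b) sequentially"
  proof (rule tannerys_theorem[where M = b])
    show "\<And>k. (\<lambda>n. a k n) \<longlonglongrightarrow> b k" by (rule lim)
    show "\<forall>\<^sub>F (k, n) in at_top \<times>\<^sub>F sequentially. norm (a k n) \<le> b k"
      by (rule always_eventually) (use bound in \<open>auto simp del: norm_conv_dist\<close>)
    show "summable b" using sm unfolding b_def .
  qed auto
  then have "(\<lambda>n. part_entropy M (\<gamma>s n)) \<longlonglongrightarrow> suminf b" unfolding Hn by blast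
  then show ?thesis unfolding b_def part_entropy_def .
qed

end

definition joinc :: "(nat \<Rightarrow> 'x set) \<Rightarrow> (nat \<Rightarrow> nat \<Rightarrow> 'x set) \<Rightarrow> nat \<Rightarrow> nat \<Rightarrow> 'x set" where
  "joinc \<alpha> \<beta>s n i = (if i < n then \<alpha> i else \<beta>s n (i - n) - (\<Union>j<n. \<alpha> j))"

context gsys begin

lemma em0_null: "emeasure M (A - B) = 0 \<Longrightarrow> A \<in> sets M \<Longrightarrow> B \<in> sets M \<Longrightarrow> A - B \<in> null_sets M"
  by (auto simp: null_sets_def)

lemma em0_sub: "A \<in> sets M \<Longrightarrow> B \<in> sets M \<Longrightarrow> A - B \<subseteq> N \<Longrightarrow> N \<in> null_sets M \<Longrightarrow> emeasure M (A - B) = 0"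
proof -
  assume "A \<in> sets M" "B \<in> sets M" "A - B \<subseteq> N" "N \<in> null_sets M"
  then have "A - B \<in> null_sets M" using null_sets_subset by blast
  then show ?thesis by (simp add: null_sets_def)
qed

lemma joinc_chain:
  assumes p\<alpha>: "is_partition M \<alpha>" and p\<beta>: "is_partition M \<beta>" and le: "part_le M \<beta> \<alpha>"
    and ch: "is_chain M \<beta>s \<beta>"
  shows "is_chain M (joinc \<alpha> \<beta>s) \<alpha>" and "\<And>n. part_le M (\<beta>s n) (joinc \<alpha> \<beta>s n)"
proof -
  have pn: "is_partition M (\<beta>s n)" and fn: "finite_part M (\<beta>s n)" for n
    using ch unfolding is_chain_def by auto
  have len: "part_le M (\<beta>s n) \<beta>" for n using ch unfolding is_chain_def by auto
  have lenS: "part_le M (\<beta>s n) (\<beta>s (Suc n))" for n using ch unfolding is_chain_def by auto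
  have as: "\<alpha> i \<in> sets M" for i using part_sets[OF p\<alpha>] .
  have bs: "\<beta> i \<in> sets M" for i using part_sets[OF p\<beta>] .
  have bns: "\<beta>s n i \<in> sets M" for n i using part_sets[OF pn] .
  have Us: "(\<Union>j<n. \<alpha> j) \<in> sets M" for n using as by auto
  have js: "joinc \<alpha> \<beta>s n i \<in> sets M" for n i unfolding joinc_def using as bns Us by auto
  have A_in: "\<exists>k. \<alpha> i - \<beta>s n k \<in> null_sets M" for i n
  proof -
    obtain j where j: "emeasure M (\<alpha> i - \<beta> j) = 0" using le unfolding part_le_def by blast
    obtain k where k: "emeasure M (\<beta> j - \<beta>s n k) = 0" using len[of n] unfolding part_le_def by blast
    have n1: "\<alpha> i - \<beta> j \<in> null_sets M" by (rule em0_null[OF j as bs])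
    have n2: "\<beta> j - \<beta>s n k \<in> null_sets M" by (rule em0_null[OF k bs bns])
    have "\<alpha> i - \<beta>s n k \<in> null_sets M"
      by (rule null_sets_subset[OF null_sets.Un[OF n1 n2]]) (use as bns in auto)
    then show ?thesis by blast
  qed
  have adisj: "\<alpha> i \<inter> \<alpha> j = {}" if "i \<noteq> j" for i j
    using part_disj[OF p\<alpha>] that unfolding disjoint_family_on_def by auto
  have bdisj: "\<beta>s n i \<inter> \<beta>s n j = {}" if "i \<noteq> j" for n i j
    using part_disj[OF pn] that unfolding disjoint_family_on_def by auto
  have part: "is_partition M (joinc \<alpha> \<beta>s n)" for n
    unfolding is_partition_def
  proof (intro conjI allI)
    show "joinc \<alpha> \<beta>s n i \<in> sets M" for i by (rule js)
    show "disjoint_family (joinc \<alpha> \<beta>s n)"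
      unfolding disjoint_family_on_def
    proof (intro ballI impI)
      fix i i' :: nat assume ii: "i \<noteq> i'"
      show "joinc \<alpha> \<beta>s n i \<inter> joinc \<alpha> \<beta>s n i' = {}"
      proof (cases "i < n"; cases "i' < n")
        assume "i < n" "i' < n" then show ?thesis using adisj[OF ii] by (simp add: joinc_def)
      next
        assume "i < n" "\<not> i' < n" then show ?thesis by (auto simp: joinc_def)
      next
        assume "\<not> i < n" "i' < n" then show ?thesis by (auto simp: joinc_def)
      next
        assume "\<not> i < n" "\<not> i' < n"
        then have "i - n \<noteq> i' - n" using ii by auto
        then show ?thesis using bdisj[of "i - n" "i' - n" n] \<open>\<not> i < n\<close> \<open>\<not> i' < n\<close>
          by (auto simp: joinc_def)
      qed
    qed
    show "(\<Union>i. joinc \<alpha> \<beta>s n i) = space M"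
    proof (intro set_eqI iffI)
      fix x assume "x \<in> (\<Union>i. joinc \<alpha> \<beta>s n i)"
      then show "x \<in> space M" using js sets.sets_into_space by blast
    next
      fix x assume x: "x \<in> space M"
      show "x \<in> (\<Union>i. joinc \<alpha> \<beta>s n i)"
      proof (cases "x \<in> (\<Union>j<n. \<alpha> j)")
        case True
        then obtain j where "j < n" "x \<in> \<alpha> j" by blast
        then have "x \<in> joinc \<alpha> \<beta>s n j" by (simp add: joinc_def)
        then show ?thesis by blast
      next
        case False
        have "x \<in> \<beta>s n (lab (\<beta>s n) x)" using part_lab[OF pn x] .
        then have "x \<in> joinc \<alpha> \<beta>s n (n + lab (\<beta>s n) x)" using False by (simp add: joinc_def)
        then show ?thesis by blast
      qed
    qed
  qed
  have fin: "finite_part M (joinc \<alpha> \<beta>s n)" for n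
    unfolding finite_part_def
  proof (intro exI allI impI)
    fix i assume i: "n + part_len M (\<beta>s n) \<le> i"
    then have "\<beta>s n (i - n) \<in> null_sets M" using part_len_null[OF pn fn] by simp
    moreover have "joinc \<alpha> \<beta>s n i \<subseteq> \<beta>s n (i - n)" using i by (simp add: joinc_def)
    ultimately have "joinc \<alpha> \<beta>s n i \<in> null_sets M" using js null_sets_subset by blast
    then show "emeasure M (joinc \<alpha> \<beta>s n i) = 0" by (simp add: null_sets_def)
  qed
  show le2: "part_le M (\<beta>s n) (joinc \<alpha> \<beta>s n)" for n
    unfolding part_le_def
  proof
    fix i
    show "\<exists>k. emeasure M (joinc \<alpha> \<beta>s n i - \<beta>s n k) = 0"
    proof (cases "i < n")
      case True
      obtain k where k: "\<alpha> i - \<beta>s n k \<in> null_sets M" using A_in by blast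
      then show ?thesis using True by (intro exI[of _ k]) (simp add: joinc_def null_sets_def)
    next
      case False
      then have e: "joinc \<alpha> \<beta>s n i - \<beta>s n (i - n) = {}" by (auto simp: joinc_def)
      show ?thesis by (intro exI[of _ "i - n"]) (subst e, simp)
    qed
  qed
  have le3: "part_le M (joinc \<alpha> \<beta>s n) (joinc \<alpha> \<beta>s (Suc n))" for n
    unfolding part_le_def
  proof
    fix i
    show "\<exists>k. emeasure M (joinc \<alpha> \<beta>s (Suc n) i - joinc \<alpha> \<beta>s n k) = 0"
    proof (cases "i < n")
      case True
      then have e: "joinc \<alpha> \<beta>s (Suc n) i - joinc \<alpha> \<beta>s n i = {}" by (simp add: joinc_def)
      show ?thesis by (intro exI[of _ i]) (subst e, simp)
    next
      case False
      show ?thesis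
      proof (cases "i = n")
        case True
        obtain k where k: "\<alpha> n - \<beta>s n k \<in> null_sets M" using A_in by blast
        have "joinc \<alpha> \<beta>s (Suc n) i - joinc \<alpha> \<beta>s n (n + k) \<subseteq> \<alpha> n - \<beta>s n k"
        proof -
          have dd: "\<alpha> n \<inter> (\<Union>j<n. \<alpha> j) = {}"
          proof -
            have "\<alpha> n \<inter> \<alpha> j = {}" if "j < n" for j using adisj[of n j] that by simp
            then show ?thesis by blast
          qed
          show ?thesis using True dd by (auto simp: joinc_def)
        qed
        then show ?thesis by (intro exI[of _ "n + k"] em0_sub[OF js js _ k])
      next
        case False2: False
        obtain k where k: "emeasure M (\<beta>s (Suc n) (i - Suc n) - \<beta>s n k) = 0"
          using lenS[of n] unfolding part_le_def by blast
        have n1: "\<beta>s (Suc n) (i - Suc n) - \<beta>s n k \<in> null_sets M" by (rule em0_null[OF k bns bns])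
        have "joinc \<alpha> \<beta>s (Suc n) i - joinc \<alpha> \<beta>s n (n + k) \<subseteq> \<beta>s (Suc n) (i - Suc n) - \<beta>s n k"
          using False False2 by (auto simp: joinc_def)
        then show ?thesis by (intro exI[of _ "n + k"] em0_sub[OF js js _ n1])
      qed
    qed
  qed
  have le4: "part_le M (joinc \<alpha> \<beta>s n) \<alpha>" for n
    unfolding part_le_def
  proof
    fix i
    show "\<exists>k. emeasure M (\<alpha> i - joinc \<alpha> \<beta>s n k) = 0"
    proof (cases "i < n")
      case True
      then have e: "\<alpha> i - joinc \<alpha> \<beta>s n i = {}" by (simp add: joinc_def)
      show ?thesis by (intro exI[of _ i]) (subst e, simp)
    next
      case False
      obtain k where k: "\<alpha> i - \<beta>s n k \<in> null_sets M" using A_in by blast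
      have "\<alpha> i - joinc \<alpha> \<beta>s n (n + k) \<subseteq> \<alpha> i - \<beta>s n k"
      proof -
        have dd: "\<alpha> i \<inter> (\<Union>j<n. \<alpha> j) = {}"
        proof -
          have "\<alpha> i \<inter> \<alpha> j = {}" if "j < n" for j using adisj[of i j] that False by simp
          then show ?thesis by blast
        qed
        show ?thesis using False dd by (auto simp: joinc_def)
      qed
      then show ?thesis by (intro exI[of _ "n + k"] em0_sub[OF as js _ k])
    qed
  qed
  have gen: "\<exists>S \<in> sigma_sets (space M) (\<Union>n. range (joinc \<alpha> \<beta>s n)).
          emeasure M ((S - \<alpha> i) \<union> (\<alpha> i - S)) = 0" for i
  proof
    have "\<alpha> i = joinc \<alpha> \<beta>s (Suc i) i" by (simp add: joinc_def)
    then show "\<alpha> i \<in> sigma_sets (space M) (\<Union>n. range (joinc \<alpha> \<beta>s n))" by blast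
  qed simp
  show "is_chain M (joinc \<alpha> \<beta>s) \<alpha>"
    unfolding is_chain_def using part fin le3 le4 gen by blast
qed

end

lemma ereal_shift: "a \<le> b + ereal (x - y) \<Longrightarrow> a - ereal x \<le> b - ereal y" for a b :: ereal
  by (cases a; cases b) auto

lemma ereal_add_sub: "(a :: ereal) + ereal x - ereal x = a"
  by (cases a) auto

lemma ereal_sub_add: "(a :: ereal) - ereal x + ereal x = a"
  by (cases a) auto

lemma ereal_sub_mono: "(a :: ereal) \<le> b \<Longrightarrow> a - ereal x \<le> b - ereal x"
  by (cases a; cases b) auto

lemma core_fin':
  fixes M :: "'x measure" and T :: "'g::group_add \<Rightarrow> 'x \<Rightarrow> 'x"
    and \<sigma>s :: "nat \<Rightarrow> 'g \<Rightarrow> nat \<Rightarrow> nat" and m :: "nat \<Rightarrow> nat"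
  assumes ms: "map_sequence \<sigma>s m" and mp: "mp_action M T" and F: "finite F" "F \<noteq> {}"
    and pG: "is_partition M \<gamma>" and fG: "finite_part M \<gamma>"
    and pD: "is_partition M \<delta>" and fD: "finite_part M \<delta>"
    and le: "part_le M \<gamma> \<delta>"
  shows "sofic_H_fin M T \<sigma>s m F \<delta> - ereal (part_entropy M \<delta>) \<le> sofic_H_fin M T \<sigma>s m F \<gamma> - ereal (part_entropy M \<gamma>)"
  by (rule ereal_shift[OF core_fin[OF assms]])

lemma const_chain: "is_partition M \<beta> \<Longrightarrow> finite_part M \<beta> \<Longrightarrow> is_chain M (\<lambda>n. \<beta>) \<beta>"
proof -
  assume a: "is_partition M \<beta>" "finite_part M \<beta>"
  have pl: "part_le M \<beta> \<beta>" unfolding part_le_def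
  proof
    fix i show "\<exists>j. emeasure M (\<beta> i - \<beta> j) = 0" by (intro exI[of _ i]) simp
  qed
  have g: "\<exists>S\<in>sigma_sets (space M) (\<Union>n. range \<beta>). emeasure M (S - \<beta> i \<union> (\<beta> i - S)) = 0" for i
    by (intro bexI[of _ "\<beta> i"]) auto
  show ?thesis unfolding is_chain_def using a pl g by simp
qed

lemma KEY:
  fixes M :: "'x measure" and T :: "'g::group_add \<Rightarrow> 'x \<Rightarrow> 'x"
    and \<sigma>s :: "nat \<Rightarrow> 'g \<Rightarrow> nat \<Rightarrow> nat" and m :: "nat \<Rightarrow> nat"
  assumes ms: "map_sequence \<sigma>s m" and mp: "mp_action M T" and F: "finite F" "F \<noteq> {}"
    and P\<alpha>: "in_P M \<alpha>" and P\<beta>: "in_P M \<beta>" and le: "part_le M \<beta> \<alpha>"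
    and ch: "is_chain M \<beta>s \<beta>"
  shows "sofic_H M T \<sigma>s m F \<alpha> - ereal (part_entropy M \<alpha>)
           \<le> lim (\<lambda>n. sofic_H_fin M T \<sigma>s m F (\<beta>s n)) - ereal (part_entropy M \<beta>)"
proof -
  interpret gsys M T using mp by unfold_locales
  let ?Hf = "sofic_H_fin M T \<sigma>s m F"
  let ?H = "part_entropy M"
  have p\<alpha>: "is_partition M \<alpha>" and s\<alpha>: "summable (\<lambda>i. - measure M (\<alpha> i) * ln (measure M (\<alpha> i)))"
    using P\<alpha> unfolding in_P_def by auto
  have p\<beta>: "is_partition M \<beta>" and s\<beta>: "summable (\<lambda>i. - measure M (\<beta> i) * ln (measure M (\<beta> i)))"
    using P\<beta> unfolding in_P_def by auto
  define \<alpha>s where "\<alpha>s = joinc \<alpha> \<beta>s"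
  have ch\<alpha>: "is_chain M \<alpha>s \<alpha>" and le\<beta>\<alpha>: "\<And>n. part_le M (\<beta>s n) (\<alpha>s n)"
    unfolding \<alpha>s_def using joinc_chain[OF p\<alpha> p\<beta> le ch] by auto
  have pa: "is_partition M (\<alpha>s n)" and fa: "finite_part M (\<alpha>s n)"
    and la: "part_le M (\<alpha>s n) (\<alpha>s (Suc n))" and laa: "part_le M (\<alpha>s n) \<alpha>" for n
    using ch\<alpha> unfolding is_chain_def by auto
  have pb: "is_partition M (\<beta>s n)" and fb: "finite_part M (\<beta>s n)"
    and lb: "part_le M (\<beta>s n) (\<beta>s (Suc n))" for n
    using ch unfolding is_chain_def by auto
  define s where "s n = ?Hf (\<alpha>s n) - ereal (?H (\<alpha>s n))" for n
  define t where "t n = ?Hf (\<beta>s n) - ereal (?H (\<beta>s n))" for n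
  have ds: "decseq s" unfolding decseq_Suc_iff s_def
    using core_fin'[OF ms mp F pa fa pa fa la] by blast
  have dt: "decseq t" unfolding decseq_Suc_iff t_def
    using core_fin'[OF ms mp F pb fb pb fb lb] by blast
  have st: "s n \<le> t n" for n unfolding s_def t_def
    by (rule core_fin'[OF ms mp F pb fb pa fa le\<beta>\<alpha>])
  define Ls where "Ls = (INF n. s n)"
  define Lt where "Lt = (INF n. t n)"
  have tls: "s \<longlonglongrightarrow> Ls" unfolding Ls_def by (rule LIMSEQ_INF[OF ds])
  have tlt: "t \<longlonglongrightarrow> Lt" unfolding Lt_def by (rule LIMSEQ_INF[OF dt])
  have LsLt: "Ls \<le> Lt" unfolding Ls_def Lt_def by (rule INF_mono) (use st in blast)
  have Hb: "(\<lambda>n. ?H (\<beta>s n)) \<longlonglongrightarrow> ?H \<beta>" by (rule gen_entropy[OF ch p\<beta> s\<beta>])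
  have Ha: "(\<lambda>n. ?H (\<alpha>s n)) \<longlonglongrightarrow> ?H \<alpha>" by (rule gen_entropy[OF ch\<alpha> p\<alpha> s\<alpha>])
  have "(\<lambda>n. t n + ereal (?H (\<beta>s n))) \<longlonglongrightarrow> Lt + ereal (?H \<beta>)"
    by (rule tendsto_add_ereal_general[OF _ tlt tendsto_ereal[OF Hb]]) auto
  moreover have "(\<lambda>n. t n + ereal (?H (\<beta>s n))) = (\<lambda>n. ?Hf (\<beta>s n))"
    unfolding t_def by (simp add: ereal_sub_add)
  ultimately have "(\<lambda>n. ?Hf (\<beta>s n)) \<longlonglongrightarrow> Lt + ereal (?H \<beta>)" by simp
  then have limb: "lim (\<lambda>n. ?Hf (\<beta>s n)) = Lt + ereal (?H \<beta>)" by (rule limI)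
  have lhs: "sofic_H M T \<sigma>s m F \<alpha> - ereal (?H \<alpha>) \<le> Ls"
  proof (cases "finite_part M \<alpha>")
    case True
    then have "sofic_H M T \<sigma>s m F \<alpha> = ?Hf \<alpha>" by (simp add: sofic_H_def)
    moreover have "?Hf \<alpha> - ereal (?H \<alpha>) \<le> s n" for n
      unfolding s_def by (rule core_fin'[OF ms mp F pa fa p\<alpha> True laa])
    ultimately show ?thesis unfolding Ls_def by (auto intro: INF_greatest)
  next
    case False
    then have eq: "sofic_H M T \<sigma>s m F \<alpha> = Inf {lim (\<lambda>n. ?Hf (\<gamma>s n)) | \<gamma>s. is_chain M \<gamma>s \<alpha>}"
      by (simp add: sofic_H_def)
    have "sofic_H M T \<sigma>s m F \<alpha> \<le> lim (\<lambda>n. ?Hf (\<alpha>s n))"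
      unfolding eq by (rule Inf_lower) (use ch\<alpha> in blast)
    moreover have "(\<lambda>n. s n + ereal (?H (\<alpha>s n))) \<longlonglongrightarrow> Ls + ereal (?H \<alpha>)"
      by (rule tendsto_add_ereal_general[OF _ tls tendsto_ereal[OF Ha]]) auto
    moreover have "(\<lambda>n. s n + ereal (?H (\<alpha>s n))) = (\<lambda>n. ?Hf (\<alpha>s n))"
      unfolding s_def by (simp add: ereal_sub_add)
    ultimately have "sofic_H M T \<sigma>s m F \<alpha> \<le> Ls + ereal (?H \<alpha>)" using limI by fastforce
    then have "sofic_H M T \<sigma>s m F \<alpha> - ereal (?H \<alpha>) \<le> Ls + ereal (?H \<alpha>) - ereal (?H \<alpha>)"
      by (rule ereal_sub_mono)
    then show ?thesis by (simp add: ereal_add_sub)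
  qed
  show ?thesis using lhs LsLt unfolding limb by (simp add: ereal_add_sub)
qed

theorem proposition5p3:
  fixes M :: "'x measure"
    and T :: "'g::{group_add,countable} \<Rightarrow> 'x \<Rightarrow> 'x"
    and \<sigma> :: "nat \<Rightarrow> 'g \<Rightarrow> nat \<Rightarrow> nat" and m :: "nat \<Rightarrow> nat"
    and \<alpha> \<beta> :: "nat \<Rightarrow> 'x set" and F :: "'g set"
  assumes "map_sequence \<sigma> m"
    and "mp_action M T"
    and "in_P M \<alpha>" and "in_P M \<beta>"
    and "part_le M \<beta> \<alpha>"
    and "finite F" and "F \<noteq> {}"
  shows "sofic_H M T \<sigma> m F \<beta> - ereal (part_entropy M \<beta>)
           \<ge> sofic_H M T \<sigma> m F \<alpha> - ereal (part_entropy M \<alpha>)"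
proof (cases "finite_part M \<beta>")
  case True
  have p\<beta>: "is_partition M \<beta>" using assms(4) unfolding in_P_def by auto
  have "sofic_H M T \<sigma> m F \<alpha> - ereal (part_entropy M \<alpha>)
      \<le> lim (\<lambda>n. sofic_H_fin M T \<sigma> m F \<beta>) - ereal (part_entropy M \<beta>)"
    by (rule KEY[OF assms(1,2,6,7,3,4,5) const_chain[OF p\<beta> True]])
  moreover have "lim (\<lambda>n. sofic_H_fin M T \<sigma> m F \<beta>) = sofic_H_fin M T \<sigma> m F \<beta>"
    by (rule limI) simp
  moreover have "sofic_H M T \<sigma> m F \<beta> = sofic_H_fin M T \<sigma> m F \<beta>" using True by (simp add: sofic_H_def)
  ultimately show ?thesis by simp
next
  case False
  let ?X = "sofic_H M T \<sigma> m F \<alpha> - ereal (part_entropy M \<alpha>)"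
  let ?h = "part_entropy M \<beta>"
  have eq: "sofic_H M T \<sigma> m F \<beta> = Inf {lim (\<lambda>n. sofic_H_fin M T \<sigma> m F (\<beta>s n)) | \<beta>s. is_chain M \<beta>s \<beta>}"
    using False by (simp add: sofic_H_def)
  have "?X + ereal ?h \<le> sofic_H M T \<sigma> m F \<beta>"
    unfolding eq
  proof (rule Inf_greatest)
    fix e assume "e \<in> {lim (\<lambda>n. sofic_H_fin M T \<sigma> m F (\<beta>s n)) | \<beta>s. is_chain M \<beta>s \<beta>}"
    then obtain \<beta>s where ch: "is_chain M \<beta>s \<beta>" and e: "e = lim (\<lambda>n. sofic_H_fin M T \<sigma> m F (\<beta>s n))" by blast
    have "?X \<le> e - ereal ?h" unfolding e by (rule KEY[OF assms(1,2,6,7,3,4,5) ch])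
    then show "?X + ereal ?h \<le> e" by (cases ?X; cases e) auto
  qed
  then show ?thesis by (cases ?X; cases "sofic_H M T \<sigma> m F \<beta>") auto
qed


end
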